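(* Let $a$ be a spectral measure on $\mathbb S^{n-1}$ and $u\in H^1_{a,0}(\mathbb R^n)$. Then $$\lim_{s\to1}(1-s)\,[u]^2_{H^s_a(\mathbb R^n)}=[u]^2_{H^1_a(\mathbb R^n)}.$$
   Context: A spectral measure is a non-negative finite Borel measure $a$ on $\mathbb S^{n-1}$ with $0<\int_{\mathbb S^{n-1}}da\le\Lambda$. Definitions: $[u]_{H^1_a(\mathbb R^n)}=\Big(\int_{\mathbb R^n}dx\int_{\mathbb S^{n-1}}da(\omega)\,(\nabla u(x)\cdot\omega)^2\Big)^{1/2}$, $\|u\|_{H^1_a(\mathbb R^n)}=[u]_{H^1_a(\mathbb R^n)}+\|u\|_{L^2(\mathbb R^n)}$, $H^1_{a,0}(\mathbb R^n)$ is the closure of $C_c^\infty(\mathbb R^n)$ with respect to $\|\cdot\|_{H^1_a(\mathbb R^n)}$, and for $s\in(0,1)$ $[u]_{H^s_a(\mathbb R^n)}=\Big(\int_{\mathbb R^n}dx\int_{\mathbb R}d\rho\int_{\mathbb S^{n-1}}da(\omega)\,\frac{(u(x)-u(x+\rho\omega))^2}{|\rho|^{1+2s}}\Big)^{1/2}$. *)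

theory Defs
  imports "HOL-Analysis.Analysis"
begin

text \<open>The ambient space R^n is an arbitrary Euclidean space 'a; the sphere S^{n-1} is sphere 0 1.\<close>

definition spectral_measure :: "real \<Rightarrow> 'a::euclidean_space measure \<Rightarrow> bool" where
  "spectral_measure \<Lambda> a \<longleftrightarrow>
     sets a = sets (restrict_space borel (sphere (0::'a) 1)) \<and>
     0 < emeasure a (space a) \<and> emeasure a (space a) \<le> ennreal \<Lambda>"

coinductive smooth_fun :: "('a::euclidean_space \<Rightarrow> real) \<Rightarrow> bool" where
  "(\<forall>x. f differentiable (at x)) \<Longrightarrow>
   (\<forall>v. smooth_fun (\<lambda>x. frechet_derivative f (at x) v)) \<Longrightarrow> smooth_fun f"

definition Cc_inf :: "('a::euclidean_space \<Rightarrow> real) set" where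
  "Cc_inf = {f. smooth_fun f \<and> compact (closure {x. f x \<noteq> 0})}"

text \<open>Squared H^1_a seminorm of a smooth function (nabla f(x) . omega = Df(x) omega).\<close>
definition H1a_sq_smooth :: "'a::euclidean_space measure \<Rightarrow> ('a \<Rightarrow> real) \<Rightarrow> ennreal" where
  "H1a_sq_smooth a f =
     (\<integral>\<^sup>+ x. (\<integral>\<^sup>+ \<omega>. ennreal ((frechet_derivative f (at x) \<omega>)\<^sup>2) \<partial>a) \<partial>lborel)"

definition L2_dist_sq :: "('a::euclidean_space \<Rightarrow> real) \<Rightarrow> ('a \<Rightarrow> real) \<Rightarrow> ennreal" where
  "L2_dist_sq f g = (\<integral>\<^sup>+ x. ennreal ((f x - g x)\<^sup>2) \<partial>lborel)"

definition H1a0_approx :: "'a::euclidean_space measure \<Rightarrow> ('a \<Rightarrow> real) \<Rightarrow> (nat \<Rightarrow> 'a \<Rightarrow> real) \<Rightarrow> bool" where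
  "H1a0_approx a u \<phi> \<longleftrightarrow>
     (\<forall>k. \<phi> k \<in> Cc_inf) \<and>
     (\<forall>e>0. \<exists>N. \<forall>m\<ge>N. \<forall>k\<ge>N.
        H1a_sq_smooth a (\<lambda>x. \<phi> m x - \<phi> k x) + L2_dist_sq (\<phi> m) (\<phi> k) < ennreal e) \<and>
     (\<lambda>k. L2_dist_sq (\<phi> k) u) \<longlonglongrightarrow> 0"

text \<open>H^1_{a,0}: the closure of C_c^infinity (completion), realised by L^2 representatives.\<close>
definition H1a0 :: "'a::euclidean_space measure \<Rightarrow> ('a \<Rightarrow> real) set" where
  "H1a0 a = {u. u \<in> borel_measurable lborel \<and> (\<exists>\<phi>. H1a0_approx a u \<phi>)}"

definition H1a_sq :: "'a::euclidean_space measure \<Rightarrow> ('a \<Rightarrow> real) \<Rightarrow> ennreal" where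
  "H1a_sq a u = (THE L. \<forall>\<phi>. H1a0_approx a u \<phi> \<longrightarrow> (\<lambda>k. H1a_sq_smooth a (\<phi> k)) \<longlonglongrightarrow> L)"

definition Hsa_sq :: "'a::euclidean_space measure \<Rightarrow> real \<Rightarrow> ('a \<Rightarrow> real) \<Rightarrow> ennreal" where
  "Hsa_sq a s u =
     (\<integral>\<^sup>+ x. (\<integral>\<^sup>+ \<rho>. (\<integral>\<^sup>+ \<omega>.
        ennreal ((u x - u (x + \<rho> *\<^sub>R \<omega>))\<^sup>2 / \<bar>\<rho>\<bar> powr (1 + 2 * s)) \<partial>a) \<partial>lborel) \<partial>lborel)"

end

theory Submission
  imports Defs "HOL-Analysis.Analysis"
begin


locale spec =
  fixes a :: "'a::euclidean_space measure"
  assumes sets_a: "sets a = sets (restrict_space borel (sphere (0::'a) 1))"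
    and fin: "emeasure a (space a) < \<infinity>"
begin

lemma space_a: "space a = sphere 0 1"
  using sets_eq_imp_space_eq[OF sets_a] by (simp add: space_restrict_space)

sublocale finite_measure a
  using fin by (intro finite_measureI) auto

sublocale P: pair_sigma_finite lborel a
  by (intro pair_sigma_finite.intro) (simp_all add: lborel.sigma_finite_measure_axioms sigma_finite_measure_axioms)

lemma meas_id_a[measurable]: "(\<lambda>x. x) \<in> measurable a borel"
proof -
  have "(\<lambda>x. x) \<in> measurable (restrict_space borel (sphere (0::'a) 1)) borel"
    by (intro measurable_restrict_space1) simp
  then show ?thesis using measurable_cong_sets[OF sets_a refl] by blast
qed

lemma meas_fst[measurable]: "fst \<in> measurable (lborel \<Otimes>\<^sub>M a) borel"
  using measurable_fst[of lborel a] by (simp add: measurable_lborel1)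

lemma meas_snd[measurable]: "snd \<in> measurable (lborel \<Otimes>\<^sub>M a) borel"
  using measurable_compose[OF measurable_snd meas_id_a] by (simp add: comp_def)

lemma space_M: "space (lborel \<Otimes>\<^sub>M a) = UNIV \<times> sphere 0 1"
  by (simp add: space_pair_measure space_a)

lemma meas_shift[measurable]:
  fixes g :: "'a \<Rightarrow> real"
  assumes [measurable]: "g \<in> borel_measurable borel"
  shows "(\<lambda>p. g (fst p + r *\<^sub>R snd p)) \<in> borel_measurable (lborel \<Otimes>\<^sub>M a)"
  by measurable

end


lemma mink_real:
  fixes A B X :: real
  assumes hA: "A \<ge> 0" and hB: "B \<ge> 0" and H: "\<And>t. t > 0 \<Longrightarrow> X \<le> (1+t)*A + (1+1/t)*B"
  shows "sqrt X \<le> sqrt A + sqrt B"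
proof -
  define \<alpha> where "\<alpha> = sqrt A"
  define \<beta> where "\<beta> = sqrt B"
  have a0: "\<alpha> \<ge> 0" "\<beta> \<ge> 0" using hA hB by (auto simp: \<alpha>_def \<beta>_def)
  have AA: "A = \<alpha>^2" "B = \<beta>^2" using hA hB by (auto simp: \<alpha>_def \<beta>_def)
  have "X \<le> (\<alpha>+\<beta>)^2 + h*(\<alpha>+\<beta>)" if h: "h > 0" for h
  proof -
    define t where "t = (\<beta>+h)/(\<alpha>+h)"
    have t0: "t > 0" using a0 h by (auto simp: t_def)
    have 1: "t*A \<le> \<alpha>*(\<beta>+h)"
    proof -
      have "t*A = \<alpha> * (\<alpha>/(\<alpha>+h)) * (\<beta>+h)" using a0 h by (simp add: t_def AA power2_eq_square field_simps)
      also have "\<dots> \<le> \<alpha> * 1 * (\<beta>+h)" using a0 h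
        by (intro mult_right_mono mult_left_mono) (auto simp: field_simps)
      finally show ?thesis by simp
    qed
    have 2: "B/t \<le> \<beta>*(\<alpha>+h)"
    proof -
      have "B/t = \<beta> * (\<beta>/(\<beta>+h)) * (\<alpha>+h)" using a0 h by (simp add: t_def AA power2_eq_square field_simps)
      also have "\<dots> \<le> \<beta> * 1 * (\<alpha>+h)" using a0 h
        by (intro mult_right_mono mult_left_mono) (auto simp: field_simps)
      finally show ?thesis by simp
    qed
    have "X \<le> (1+t)*A + (1+1/t)*B" using H t0 .
    also have "\<dots> = A + B + t*A + B/t" by (simp add: field_simps)
    also have "\<dots> \<le> A + B + \<alpha>*(\<beta>+h) + \<beta>*(\<alpha>+h)" using 1 2 by simp
    also have "\<dots> = (\<alpha>+\<beta>)^2 + h*(\<alpha>+\<beta>)" by (simp add: AA power2_eq_square algebra_simps)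
    finally show ?thesis .
  qed
  note HH = this
  then have "X \<le> (\<alpha>+\<beta>)^2"
  proof (cases "\<alpha>+\<beta> = 0")
    case True then show ?thesis using HH[of 1] by simp
  next
    case False
    then have pos: "\<alpha>+\<beta> > 0" using a0 by simp
    show ?thesis
    proof (rule field_le_epsilon)
      fix e :: real assume "e > 0"
      then show "X \<le> (\<alpha>+\<beta>)^2 + e"
        using HH[of "e/(\<alpha>+\<beta>)"] pos by simp
    qed
  qed
  then have "sqrt X \<le> sqrt ((\<alpha>+\<beta>)^2)" by (rule real_sqrt_le_mono)
  also have "\<dots> = \<alpha>+\<beta>" using a0 by simp
  finally show ?thesis by (simp add: \<alpha>_def \<beta>_def)
qed

definition N2 :: "'b measure \<Rightarrow> ('b \<Rightarrow> real) \<Rightarrow> ennreal" where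
  "N2 M f = (\<integral>\<^sup>+x. ennreal ((f x)\<^sup>2) \<partial>M)"

lemma sq_split:
  fixes f g t :: real assumes "t > 0"
  shows "(f+g)^2 \<le> (1+t)*f^2 + (1+1/t)*g^2"
proof -
  have "t*(f+g)^2 \<le> t*((1+t)*f^2 + (1+1/t)*g^2)"
  proof -
    have "t*((1+t)*f^2 + (1+1/t)*g^2) - t*(f+g)^2 = (t*f-g)^2"
      using assms by (simp add: power2_eq_square field_simps)
    then show ?thesis by (metis diff_ge_0_iff_ge zero_le_power2)
  qed
  then show ?thesis using assms by simp
qed

lemma N2_mink_enn:
  assumes [measurable]: "f \<in> borel_measurable M" "g \<in> borel_measurable M" and t: "t > 0"
  shows "N2 M (\<lambda>x. f x + g x) \<le> ennreal (1+t) * N2 M f + ennreal (1+1/t) * N2 M g"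
proof -
  have "N2 M (\<lambda>x. f x + g x) \<le> (\<integral>\<^sup>+x. ennreal (1+t) * ennreal ((f x)\<^sup>2) + ennreal (1+1/t) * ennreal ((g x)\<^sup>2) \<partial>M)"
    unfolding N2_def
  proof (intro nn_integral_mono)
    fix x
    have "(f x + g x)\<^sup>2 \<le> (1+t)*(f x)^2 + (1+1/t)*(g x)^2" by (rule sq_split[OF t])
    then have "ennreal ((f x + g x)\<^sup>2) \<le> ennreal ((1+t)*(f x)^2 + (1+1/t)*(g x)^2)"
      by (rule ennreal_leI)
    also have "\<dots> = ennreal (1+t) * ennreal ((f x)\<^sup>2) + ennreal (1+1/t) * ennreal ((g x)\<^sup>2)"
      using t by (subst ennreal_plus) (auto simp: ennreal_mult)
    finally show "ennreal ((f x + g x)\<^sup>2) \<le> \<dots>" .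
  qed
  also have "\<dots> = (\<integral>\<^sup>+x. ennreal (1+t) * ennreal ((f x)\<^sup>2) \<partial>M) + (\<integral>\<^sup>+x. ennreal (1+1/t) * ennreal ((g x)\<^sup>2) \<partial>M)"
    by (rule nn_integral_add) auto
  also have "\<dots> = ennreal (1+t) * N2 M f + ennreal (1+1/t) * N2 M g"
    unfolding N2_def by (simp add: nn_integral_cmult)
  finally show ?thesis .
qed

lemma N2_mink:
  assumes [measurable]: "f \<in> borel_measurable M" "g \<in> borel_measurable M"
    and "N2 M f < \<infinity>" "N2 M g < \<infinity>"
  shows "N2 M (\<lambda>x. f x + g x) < \<infinity>"
    "sqrt (enn2real (N2 M (\<lambda>x. f x + g x))) \<le> sqrt (enn2real (N2 M f)) + sqrt (enn2real (N2 M g))"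
proof -
  define A where "A = enn2real (N2 M f)"
  define B where "B = enn2real (N2 M g)"
  have AB: "N2 M f = ennreal A" "N2 M g = ennreal B" "A \<ge> 0" "B \<ge> 0"
    using assms(3,4) by (simp_all add: A_def B_def)
  have le: "N2 M (\<lambda>x. f x + g x) \<le> ennreal ((1+t)*A + (1+1/t)*B)" if "t > 0" for t
  proof -
    have "ennreal ((1+t)*A + (1+1/t)*B) = ennreal (1+t) * ennreal A + ennreal (1+1/t) * ennreal B"
      using that AB by (subst ennreal_plus) (auto simp: ennreal_mult)
    then show ?thesis using N2_mink_enn[OF assms(1,2) that] AB(1,2) by simp
  qed
  show fin: "N2 M (\<lambda>x. f x + g x) < \<infinity>"
    by (rule order.strict_trans1[OF le[OF zero_less_one]]) simp
  define X where "X = enn2real (N2 M (\<lambda>x. f x + g x))"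
  have X: "N2 M (\<lambda>x. f x + g x) = ennreal X" "X \<ge> 0"
    using fin by (simp_all add: X_def)
  have "X \<le> (1+t)*A + (1+1/t)*B" if "t > 0" for t
  proof -
    have nn: "0 \<le> (1+t)*A + (1+1/t)*B" using that AB by simp
    from le[OF that] X(1) have "ennreal X \<le> ennreal ((1+t)*A + (1+1/t)*B)" by simp
    then show ?thesis by (simp add: ennreal_le_iff[OF nn])
  qed
  from mink_real[OF AB(3,4) this] show "sqrt (enn2real (N2 M (\<lambda>x. f x + g x))) \<le> sqrt (enn2real (N2 M f)) + sqrt (enn2real (N2 M g))"
    using X AB by simp
qed


definition L2fun :: "('a::euclidean_space \<Rightarrow> real) \<Rightarrow> bool" where
  "L2fun g \<longleftrightarrow> g \<in> borel_measurable borel \<and> N2 lborel g < \<infinity>"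

lemma N2_uminus: "N2 M (\<lambda>x. - f x) = N2 M f" by (simp add: N2_def)

lemma N2_fin_real: "N2 M f < \<infinity> \<Longrightarrow> N2 M f = ennreal (enn2real (N2 M f))" by simp

lemma L2fun_add: "L2fun f \<Longrightarrow> L2fun g \<Longrightarrow> L2fun (\<lambda>x. f x + g x)"
proof -
  assume f: "L2fun f" and g: "L2fun g"
  have [measurable]: "f \<in> borel_measurable lborel" "g \<in> borel_measurable lborel"
    using f g by (auto simp: L2fun_def)
  have "N2 lborel (\<lambda>x. f x + g x) < \<infinity>"
    by (rule N2_mink(1)) (use f g in \<open>auto simp: L2fun_def\<close>)
  then show ?thesis using f g by (auto simp: L2fun_def)
qed

lemma L2fun_uminus: "L2fun f \<Longrightarrow> L2fun (\<lambda>x. - f x)"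
  unfolding L2fun_def by (simp add: N2_uminus)

lemma L2fun_diff: "L2fun f \<Longrightarrow> L2fun g \<Longrightarrow> L2fun (\<lambda>x. f x - g x)"
  using L2fun_add[OF _ L2fun_uminus, of f g] by simp

lemma lborel_translate:
  fixes f :: "'a::euclidean_space \<Rightarrow> ennreal"
  assumes [measurable]: "f \<in> borel_measurable borel"
  shows "(\<integral>\<^sup>+x. f (x + c) \<partial>lborel) = (\<integral>\<^sup>+x. f x \<partial>lborel)"
proof -
  have "(\<integral>\<^sup>+x. f x \<partial>lborel) = (\<integral>\<^sup>+x. f x \<partial>distr lborel borel ((+) c))"
    by (simp add: lborel_distr_plus)
  also have "\<dots> = (\<integral>\<^sup>+x. f (c + x) \<partial>lborel)"
    by (subst nn_integral_distr) auto
  finally show ?thesis by (simp add: add.commute)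
qed

context spec
begin

abbreviation "M \<equiv> lborel \<Otimes>\<^sub>M a"

lemma M_translate:
  fixes h :: "'a \<times> 'a \<Rightarrow> ennreal"
  assumes hm[measurable]: "h \<in> borel_measurable M"
  shows "(\<integral>\<^sup>+p. h (fst p + c *\<^sub>R snd p, snd p) \<partial>M) = integral\<^sup>N M h"
proof -
  have mT: "(\<lambda>p. (fst p + c *\<^sub>R snd p, snd p)) \<in> measurable M M"
    by (intro measurable_Pair) (auto simp: measurable_lborel2 intro: measurable_snd)
  have m2: "(\<lambda>p. h (fst p + c *\<^sub>R snd p, snd p)) \<in> borel_measurable M"
    using measurable_compose[OF mT hm] by (simp add: comp_def)
  have "(\<integral>\<^sup>+p. h (fst p + c *\<^sub>R snd p, snd p) \<partial>M) = (\<integral>\<^sup>+ y. (\<integral>\<^sup>+ x. h (x + c *\<^sub>R y, y) \<partial>lborel) \<partial>a)"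
    using P.nn_integral_snd[OF m2] by simp
  also have "\<dots> = (\<integral>\<^sup>+ y. (\<integral>\<^sup>+ x. h (x, y) \<partial>lborel) \<partial>a)"
  proof (rule nn_integral_cong)
    fix y assume y: "y \<in> space a"
    have [measurable]: "(\<lambda>x. h (x, y)) \<in> borel_measurable borel"
      using measurable_Pair1[OF hm y] by (simp add: measurable_lborel1)
    show "(\<integral>\<^sup>+ x. h (x + c *\<^sub>R y, y) \<partial>lborel) = (\<integral>\<^sup>+ x. h (x, y) \<partial>lborel)"
      by (rule lborel_translate) simp
  qed
  also have "\<dots> = integral\<^sup>N M h"
    using P.nn_integral_snd[OF hm] by simp
  finally show ?thesis .
qed

definition Q :: "('a \<Rightarrow> real) \<Rightarrow> real \<Rightarrow> ennreal" where
  "Q g r = N2 M (\<lambda>p. g (fst p) - g (fst p + r *\<^sub>R snd p))"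

definition qn :: "('a \<Rightarrow> real) \<Rightarrow> real \<Rightarrow> real" where
  "qn g r = sqrt (enn2real (Q g r))"

lemma qn_nonneg: "qn g r \<ge> 0" by (simp add: qn_def)

lemma N2_fst: "N2 M (\<lambda>p. g (fst p)) = N2 lborel g * emeasure a (space a)"
  if [measurable]: "g \<in> borel_measurable borel"
proof -
  have "N2 M (\<lambda>p. g (fst p)) = (\<integral>\<^sup>+ x. \<integral>\<^sup>+ y. ennreal ((g x)\<^sup>2) \<partial>a \<partial>lborel)"
  proof -
    have m: "(\<lambda>p. ennreal ((g (fst p))\<^sup>2)) \<in> borel_measurable M" by measurable
    show ?thesis unfolding N2_def using nn_integral_fst[OF m] by simp
  qed
  also have "\<dots> = (\<integral>\<^sup>+ x. ennreal ((g x)\<^sup>2) * emeasure a (space a) \<partial>lborel)"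
    by simp
  also have "\<dots> = N2 lborel g * emeasure a (space a)"
    unfolding N2_def by (rule nn_integral_multc) (simp add: measurable_lborel1)
  finally show ?thesis .
qed

lemma N2_shift: "N2 M (\<lambda>p. g (fst p + r *\<^sub>R snd p)) = N2 lborel g * emeasure a (space a)"
  if [measurable]: "g \<in> borel_measurable borel"
proof -
  have "N2 M (\<lambda>p. g (fst p + r *\<^sub>R snd p)) = (\<integral>\<^sup>+p. (\<lambda>q. ennreal ((g (fst q))\<^sup>2)) (fst p + r *\<^sub>R snd p, snd p) \<partial>M)"
    by (simp add: N2_def)
  also have "\<dots> = N2 M (\<lambda>p. g (fst p))"
    unfolding N2_def by (rule M_translate) simp
  finally show ?thesis using N2_fst[OF that] by simp
qed

definition ma where "ma = measure a (space a)"

lemma emeasure_a: "emeasure a (space a) = ennreal ma"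
  by (simp add: ma_def emeasure_eq_measure)

lemma ma_nonneg: "ma \<ge> 0" by (simp add: ma_def)

lemma Q_L2:
  assumes "L2fun g"
  shows "Q g r < \<infinity>" "qn g r \<le> 2 * sqrt (ma * enn2real (N2 lborel g))"
proof -
  have gm[measurable]: "g \<in> borel_measurable borel" and gf: "N2 lborel g < \<infinity>"
    using assms by (auto simp: L2fun_def)
  have f1: "N2 M (\<lambda>p. g (fst p)) < \<infinity>" and f2: "N2 M (\<lambda>p. - g (fst p + r *\<^sub>R snd p)) < \<infinity>"
    using gf by (simp_all add: N2_fst N2_shift N2_uminus emeasure_a ennreal_mult_less_top)
  have e1: "enn2real (N2 M (\<lambda>p. g (fst p))) = enn2real (N2 lborel g) * ma"
    and e2: "enn2real (N2 M (\<lambda>p. - g (fst p + r *\<^sub>R snd p))) = enn2real (N2 lborel g) * ma"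
    by (simp_all add: N2_fst N2_shift N2_uminus emeasure_a enn2real_mult ma_nonneg)
  note mk = N2_mink[OF _ _ f1 f2]
  have eq: "(\<lambda>p. g (fst p) + - g (fst p + r *\<^sub>R snd p)) = (\<lambda>p. g (fst p) - g (fst p + r *\<^sub>R snd p))"
    by simp
  show "Q g r < \<infinity>" using mk(1) unfolding eq Q_def by simp
  have "qn g r \<le> sqrt (enn2real (N2 lborel g) * ma) + sqrt (enn2real (N2 lborel g) * ma)"
    using mk(2) unfolding eq Q_def qn_def e1 e2 by simp
  then show "qn g r \<le> 2 * sqrt (ma * enn2real (N2 lborel g))" by (simp add: mult.commute)
qed

lemma qn_add:
  assumes "L2fun g1" "L2fun g2"
  shows "qn (\<lambda>x. g1 x + g2 x) r \<le> qn g1 r + qn g2 r"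
proof -
  have [measurable]: "g1 \<in> borel_measurable borel" "g2 \<in> borel_measurable borel"
    using assms by (auto simp: L2fun_def)
  have f: "Q g1 r < \<infinity>" "Q g2 r < \<infinity>" using Q_L2 assms by auto
  note mk = N2_mink(2)[OF _ _ f[unfolded Q_def]]
  have eq: "(\<lambda>p. (g1 (fst p) - g1 (fst p + r *\<^sub>R snd p)) + (g2 (fst p) - g2 (fst p + r *\<^sub>R snd p)))
     = (\<lambda>p. (g1 (fst p) + g2 (fst p)) - (g1 (fst p + r *\<^sub>R snd p) + g2 (fst p + r *\<^sub>R snd p)))"
    by (simp add: algebra_simps)
  show ?thesis using mk unfolding eq qn_def Q_def by simp
qed

lemma qn_uminus: "qn (\<lambda>x. - g x) r = qn g r"
proof -
  have "\<And>p. (- g (fst p) - - g (fst p + r *\<^sub>R snd p))\<^sup>2 = (g (fst p) - g (fst p + r *\<^sub>R snd p))\<^sup>2"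
    by (simp add: power2_eq_square algebra_simps)
  then show ?thesis unfolding qn_def Q_def N2_def by presburger
qed

lemma qn_diff:
  assumes "L2fun g1" "L2fun g2"
  shows "qn (\<lambda>x. g1 x - g2 x) r \<le> qn g1 r + qn g2 r"
  using qn_add[OF assms(1) L2fun_uminus[OF assms(2)], of r] by (simp add: qn_uminus)

lemma qn_rev:
  assumes "L2fun g1" "L2fun g2"
  shows "\<bar>qn g1 r - qn g2 r\<bar> \<le> qn (\<lambda>x. g1 x - g2 x) r"
proof -
  have "qn g1 r \<le> qn (\<lambda>x. g1 x - g2 x) r + qn g2 r"
    using qn_add[OF L2fun_diff[OF assms] assms(2), of r] by simp
  moreover have "qn g2 r \<le> qn (\<lambda>x. g2 x - g1 x) r + qn g1 r"
    using qn_add[OF L2fun_diff[OF assms(2,1)] assms(1), of r] by simp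
  moreover have "qn (\<lambda>x. g2 x - g1 x) r = qn (\<lambda>x. g1 x - g2 x) r"
    using qn_uminus[of "\<lambda>x. g1 x - g2 x" r] by simp
  ultimately show ?thesis by linarith
qed

lemma qn_shift:
  assumes "L2fun g"
  shows "qn g (r1 + r2) \<le> qn g r1 + qn g r2"
proof -
  have [measurable]: "g \<in> borel_measurable borel" using assms by (auto simp: L2fun_def)
  have f: "Q g r1 < \<infinity>" "Q g r2 < \<infinity>" using Q_L2 assms by auto
  have e2: "N2 M (\<lambda>p. g (fst p + r1 *\<^sub>R snd p) - g (fst p + r1 *\<^sub>R snd p + r2 *\<^sub>R snd p)) = Q g r2"
  proof -
    have "N2 M (\<lambda>p. g (fst p + r1 *\<^sub>R snd p) - g (fst p + r1 *\<^sub>R snd p + r2 *\<^sub>R snd p))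
      = (\<integral>\<^sup>+p. (\<lambda>q. ennreal ((g (fst q) - g (fst q + r2 *\<^sub>R snd q))\<^sup>2)) (fst p + r1 *\<^sub>R snd p, snd p) \<partial>M)"
      by (simp add: N2_def)
    also have "\<dots> = Q g r2" unfolding Q_def N2_def by (rule M_translate) simp
    finally show ?thesis .
  qed
  have f2: "N2 M (\<lambda>p. g (fst p + r1 *\<^sub>R snd p) - g (fst p + r1 *\<^sub>R snd p + r2 *\<^sub>R snd p)) < \<infinity>"
    using e2 f by simp
  note mk = N2_mink(2)[OF _ _ f(1)[unfolded Q_def] f2]
  have eq: "(\<lambda>p. (g (fst p) - g (fst p + r1 *\<^sub>R snd p)) + (g (fst p + r1 *\<^sub>R snd p) - g (fst p + r1 *\<^sub>R snd p + r2 *\<^sub>R snd p)))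
     = (\<lambda>p. g (fst p) - g (fst p + (r1 + r2) *\<^sub>R snd p))"
    by (simp add: algebra_simps scaleR_add_left)
  show ?thesis using mk unfolding eq qn_def e2 by (simp add: Q_def)
qed

lemma qn_zero: "qn g 0 = 0" by (simp add: qn_def Q_def N2_def)

lemma qn_mult:
  assumes "L2fun g"
  shows "qn g (real n * r) \<le> real n * qn g r"
proof (induction n)
  case 0 then show ?case by (simp add: qn_zero)
next
  case (Suc n)
  have "qn g (real (Suc n) * r) = qn g (real n * r + r)" by (simp add: algebra_simps)
  also have "\<dots> \<le> qn g (real n * r) + qn g r" by (rule qn_shift[OF assms])
  also have "\<dots> \<le> real (Suc n) * qn g r" using Suc by (simp add: algebra_simps)
  finally show ?case .
qed

end


abbreviation Df :: "('a::euclidean_space \<Rightarrow> real) \<Rightarrow> 'a \<Rightarrow> 'a \<Rightarrow> real" where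
  "Df f x v \<equiv> frechet_derivative f (at x) v"

lemma smooth_diff: "smooth_fun f \<Longrightarrow> \<forall>x. f differentiable (at x)"
  by (erule smooth_fun.cases) auto

lemma smooth_der: "smooth_fun f \<Longrightarrow> smooth_fun (\<lambda>x. Df f x v)"
  by (erule smooth_fun.cases) auto

lemma smooth_has_der: "smooth_fun f \<Longrightarrow> (f has_derivative frechet_derivative f (at x)) (at x)"
  using smooth_diff frechet_derivative_works by blast

lemma smooth_cont: "smooth_fun f \<Longrightarrow> continuous_on UNIV f"
  using smooth_diff differentiable_imp_continuous_on differentiable_at_imp_differentiable_on by blast

lemma smooth_minus:
  assumes "smooth_fun f" "smooth_fun g"
  shows "smooth_fun (\<lambda>x. f x - g x)"
proof -
  define X :: "('a \<Rightarrow> real) \<Rightarrow> bool" where "X = (\<lambda>h. \<exists>f g. h = (\<lambda>x. f x - g x) \<and> smooth_fun f \<and> smooth_fun g)"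
  have "X (\<lambda>x. f x - g x)" using assms by (auto simp: X_def)
  then show ?thesis
  proof (rule smooth_fun.coinduct[of X])
    fix h assume "X h"
    then obtain f g where h: "h = (\<lambda>x. f x - g x)" and f: "smooth_fun f" and g: "smooth_fun g"
      by (auto simp: X_def)
    have der: "(h has_derivative (\<lambda>v. Df f x v - Df g x v)) (at x)" for x
      unfolding h by (intro has_derivative_diff smooth_has_der f g)
    have "h differentiable (at x)" for x using der by (auto simp: differentiable_def)
    moreover have "X (\<lambda>x. Df h x v)" for v
    proof -
      have "(\<lambda>x. Df h x v) = (\<lambda>x. Df f x v - Df g x v)"
        using der[THEN frechet_derivative_at] by (metis (no_types, lifting))
      moreover have "smooth_fun (\<lambda>x. Df f x v)" "smooth_fun (\<lambda>x. Df g x v)"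
        using smooth_der f g by auto
      ultimately show ?thesis unfolding X_def
        by (intro exI[of _ "\<lambda>x. Df f x v"] exI[of _ "\<lambda>x. Df g x v"]) simp
    qed
    ultimately show "\<exists>f. h = f \<and> (\<forall>x. f differentiable at x) \<and>
         (\<forall>v. X (\<lambda>x. frechet_derivative f (at x) v) \<or> smooth_fun (\<lambda>x. frechet_derivative f (at x) v))"
      by auto
  qed
qed

lemma Cc_inf_minus:
  assumes "f \<in> Cc_inf" "g \<in> Cc_inf"
  shows "(\<lambda>x. f x - g x) \<in> Cc_inf"
proof -
  have "{x. f x - g x \<noteq> 0} \<subseteq> {x. f x \<noteq> 0} \<union> {x. g x \<noteq> 0}" by auto
  then have "closure {x. f x - g x \<noteq> 0} \<subseteq> closure {x. f x \<noteq> 0} \<union> closure {x. g x \<noteq> 0}"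
    by (metis closure_Un closure_mono)
  moreover have "compact (closure {x. f x \<noteq> 0} \<union> closure {x. g x \<noteq> 0})"
    using assms by (auto simp: Cc_inf_def)
  ultimately have "compact ((closure {x. f x \<noteq> 0} \<union> closure {x. g x \<noteq> 0}) \<inter> closure {x. f x - g x \<noteq> 0})"
    by (intro compact_Int_closed) auto
  moreover have "(closure {x. f x \<noteq> 0} \<union> closure {x. g x \<noteq> 0}) \<inter> closure {x. f x - g x \<noteq> 0} = closure {x. f x - g x \<noteq> 0}"
    using \<open>closure {x. f x - g x \<noteq> 0} \<subseteq> _\<close> by blast
  ultimately have "compact (closure {x. f x - g x \<noteq> 0})" by simp
  moreover have "smooth_fun f" "smooth_fun g" using assms by (simp_all add: Cc_inf_def)
  ultimately show ?thesis unfolding Cc_inf_def by (simp add: smooth_minus)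
qed

context
  fixes \<psi> :: "'a::euclidean_space \<Rightarrow> real"
  assumes psi: "\<psi> \<in> Cc_inf"
begin

definition "K = closure {x. \<psi> x \<noteq> 0}"

lemma K_compact: "compact K" using psi by (simp add: Cc_inf_def K_def)

lemma psi_smooth: "smooth_fun \<psi>" using psi by (simp add: Cc_inf_def)

lemma psi_zero: "x \<notin> K \<Longrightarrow> \<psi> x = 0"
proof (rule ccontr)
  assume "x \<notin> K" "\<psi> x \<noteq> 0"
  then have "x \<in> {x. \<psi> x \<noteq> 0}" by simp
  then have "x \<in> K" unfolding K_def using closure_subset by (rule subsetD[rotated])
  then show False using \<open>x \<notin> K\<close> by simp
qed

lemma psi_cont: "continuous_on UNIV \<psi>" by (rule smooth_cont[OF psi_smooth])

lemma psi_der_zero: "x \<notin> K \<Longrightarrow> Df \<psi> x v = 0"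
proof -
  assume x: "x \<notin> K"
  have "((\<lambda>_. 0::real) has_derivative (\<lambda>_. 0)) (at x)" by simp
  moreover have "open (- K)" using K_compact by (simp add: compact_imp_closed open_Compl)
  moreover have "x \<in> - K" using x by simp
  moreover have "\<And>y. y \<in> - K \<Longrightarrow> 0 = \<psi> y" using psi_zero by simp
  ultimately have "(\<psi> has_derivative (\<lambda>_. 0)) (at x)"
    by (rule has_derivative_transform_within_open)
  then have "(\<lambda>_. 0) = frechet_derivative \<psi> (at x)" by (rule frechet_derivative_at)
  then show ?thesis by (metis (no_types))
qed

lemma psi_bounded: "\<exists>B. \<forall>x. \<bar>\<psi> x\<bar> \<le> B"
proof -
  obtain B where B: "\<forall>x\<in>K. norm (\<psi> x) \<le> B"
    using compact_imp_bounded[OF compact_continuous_image[OF continuous_on_subset[OF psi_cont] K_compact]]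
    by (auto simp: bounded_iff)
  have "\<bar>\<psi> x\<bar> \<le> max B 0" for x
  proof (cases "x \<in> K")
    case True then show ?thesis using B by fastforce
  next
    case False then show ?thesis using psi_zero[of x] by simp
  qed
  then show ?thesis by blast
qed

lemma psi_der_bounded: "\<exists>C\<ge>0. \<forall>x v. \<bar>Df \<psi> x v\<bar> \<le> C * norm v"
proof -
  have "\<exists>c. \<forall>x. \<bar>Df \<psi> x i\<bar> \<le> c" for i
  proof -
    have cont: "continuous_on UNIV (\<lambda>x. Df \<psi> x i)" by (rule smooth_cont[OF smooth_der[OF psi_smooth]])
    obtain B where B: "\<forall>x\<in>K. norm (Df \<psi> x i) \<le> B"
      using compact_imp_bounded[OF compact_continuous_image[OF continuous_on_subset[OF cont] K_compact]]
      by (auto simp: bounded_iff)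
    have "\<bar>Df \<psi> x i\<bar> \<le> max B 0" for x
    proof (cases "x \<in> K")
      case True then show ?thesis using B by fastforce
    next
      case False then show ?thesis using psi_der_zero[of x i] by simp
    qed
    then show ?thesis by blast
  qed
  then obtain c where c: "\<And>i x. \<bar>Df \<psi> x i\<bar> \<le> c i" by metis
  define C where "C = (\<Sum>i\<in>Basis. c i)"
  have "\<bar>Df \<psi> x v\<bar> \<le> C * norm v" for x v
  proof -
    have lin: "linear (Df \<psi> x)"
      using smooth_has_der[OF psi_smooth] has_derivative_linear by blast
    have "Df \<psi> x v = Df \<psi> x (\<Sum>i\<in>Basis. (v \<bullet> i) *\<^sub>R i)" by (simp add: euclidean_representation)
    also have "\<dots> = (\<Sum>i\<in>Basis. (v \<bullet> i) * Df \<psi> x i)"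
      using lin by (simp add: linear_sum linear_scale)
    finally have "\<bar>Df \<psi> x v\<bar> = \<bar>\<Sum>i\<in>Basis. (v \<bullet> i) * Df \<psi> x i\<bar>" by simp
    also have "\<dots> \<le> (\<Sum>i\<in>Basis. \<bar>(v \<bullet> i) * Df \<psi> x i\<bar>)" by (rule sum_abs)
    also have "\<dots> = (\<Sum>i\<in>Basis. \<bar>v \<bullet> i\<bar> * \<bar>Df \<psi> x i\<bar>)" by (simp add: abs_mult)
    also have "\<dots> \<le> (\<Sum>i\<in>Basis. norm v * c i)"
      by (intro sum_mono mult_mono) (auto simp: Basis_le_norm c)
    finally show ?thesis unfolding C_def sum_distrib_right by (simp add: mult.commute)
  qed
  moreover have "C \<ge> 0" unfolding C_def
  proof (rule sum_nonneg)
    fix i :: 'a show "0 \<le> c i" using c[of 0 i] by linarith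
  qed
  ultimately show ?thesis by blast
qed

lemma psi_lip: "\<exists>C\<ge>0. \<forall>x y. \<bar>\<psi> x - \<psi> y\<bar> \<le> C * norm (x - y)"
proof -
  obtain C where C: "C \<ge> 0" "\<forall>x v. \<bar>Df \<psi> x v\<bar> \<le> C * norm v" using psi_der_bounded by blast
  have "\<bar>\<psi> x - \<psi> y\<bar> \<le> C * norm (x - y)" for x y
  proof -
    have "norm (\<psi> x - \<psi> y) \<le> C * norm (x - y)"
    proof (rule differentiable_bound[where S=UNIV and f'="\<lambda>x. frechet_derivative \<psi> (at x)"])
      show "(\<psi> has_derivative frechet_derivative \<psi> (at z)) (at z within UNIV)" for z
        using smooth_has_der[OF psi_smooth] by simp
      show "onorm (frechet_derivative \<psi> (at z)) \<le> C" for z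
        by (rule onorm_le) (use C in auto)
    qed auto
    then show ?thesis by simp
  qed
  then show ?thesis using C by blast
qed

lemma psi_dq: "((\<lambda>r. (\<psi> x - \<psi> (x + r *\<^sub>R w)) / r) \<longlongrightarrow> - Df \<psi> x w) (at 0)"
proof -
  have lin: "linear (Df \<psi> x)"
    using smooth_has_der[OF psi_smooth] has_derivative_linear by blast
  have "((\<lambda>r. \<psi> (x + r *\<^sub>R w)) has_derivative (\<lambda>h. Df \<psi> x (h *\<^sub>R w))) (at 0)"
  proof -
    have "((\<lambda>r. x + r *\<^sub>R w) has_derivative (\<lambda>h. h *\<^sub>R w)) (at 0)"
      by (auto intro!: derivative_eq_intros)
    from has_derivative_compose[OF this smooth_has_der[OF psi_smooth, of "x + 0 *\<^sub>R w"]]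
    show ?thesis by (simp add: o_def)
  qed
  moreover have "(\<lambda>h. Df \<psi> x (h *\<^sub>R w)) = (\<lambda>h. h * Df \<psi> x w)"
    using lin by (simp add: linear_scale)
  moreover have "(\<lambda>h. h * Df \<psi> x w) = (*) (Df \<psi> x w)" by (auto simp: mult.commute)
  ultimately have "((\<lambda>r. \<psi> (x + r *\<^sub>R w)) has_field_derivative Df \<psi> x w) (at 0)"
    by (simp add: has_field_derivative_def)
  then have "((\<lambda>r. (\<psi> (x + r *\<^sub>R w) - \<psi> x) / r) \<longlongrightarrow> Df \<psi> x w) (at 0)"
    by (simp add: has_field_derivative_iff)
  from tendsto_minus[OF this] have "((\<lambda>r. - ((\<psi> (x + r *\<^sub>R w) - \<psi> x) / r)) \<longlongrightarrow> - Df \<psi> x w) (at 0)" .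
  moreover have "(\<lambda>r. - ((\<psi> (x + r *\<^sub>R w) - \<psi> x) / r)) = (\<lambda>r. (\<psi> x - \<psi> (x + r *\<^sub>R w)) / r)"
    by (rule ext) (simp add: minus_divide_left)
  ultimately show ?thesis by simp
qed

lemma psi_L2: "\<psi> \<in> borel_measurable borel \<and> N2 lborel \<psi> < \<infinity>"
proof
  show m: "\<psi> \<in> borel_measurable borel" using psi_cont by (rule borel_measurable_continuous_onI)
  obtain B where B: "\<forall>x. \<bar>\<psi> x\<bar> \<le> B" using psi_bounded by blast
  have "N2 lborel \<psi> \<le> (\<integral>\<^sup>+x. ennreal (B\<^sup>2) * indicator K x \<partial>lborel)"
    unfolding N2_def
  proof (rule nn_integral_mono)
    fix x
    show "ennreal ((\<psi> x)\<^sup>2) \<le> ennreal (B\<^sup>2) * indicator K x"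
    proof (cases "x \<in> K")
      case True
      have "(\<psi> x)\<^sup>2 \<le> B\<^sup>2" using B by (metis abs_ge_zero power2_abs power_mono)
      then show ?thesis using True by (simp add: ennreal_leI)
    qed (simp add: psi_zero)
  qed
  also have "\<dots> = ennreal (B\<^sup>2) * emeasure lborel K"
    using K_compact by (simp add: nn_integral_cmult_indicator compact_imp_closed borel_closed)
  also have "\<dots> < \<infinity>" using emeasure_compact_finite[OF K_compact] by (simp add: ennreal_mult_less_top)
  finally show "N2 lborel \<psi> < \<infinity>" .
qed

end


context spec
begin

lemma smooth_L2fun: "\<psi> \<in> Cc_inf \<Longrightarrow> L2fun \<psi>"
  using psi_L2 by (simp add: L2fun_def)

context
  fixes \<psi> :: "'a \<Rightarrow> real"
  assumes psi: "\<psi> \<in> Cc_inf"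
begin

definition "F r p = ((\<psi> (fst p) - \<psi> (fst p + r *\<^sub>R snd p)) / r)\<^sup>2"
definition "G p = (Df \<psi> (fst p) (snd p))\<^sup>2"

lemma psi_meas[measurable]: "\<psi> \<in> borel_measurable borel"
  using psi_L2[OF psi] by simp

lemma F_meas[measurable]: "F r \<in> borel_measurable M"
  unfolding F_def by measurable

lemma F_lim:
  assumes "\<And>i. X i \<noteq> 0" "X \<longlonglongrightarrow> 0"
  shows "(\<lambda>i. F (X i) p) \<longlonglongrightarrow> G p"
proof -
  have "((\<lambda>r. (\<psi> (fst p) - \<psi> (fst p + r *\<^sub>R snd p)) / r) \<circ> X) \<longlonglongrightarrow> - Df \<psi> (fst p) (snd p)"
    using psi_dq[OF psi, of "fst p" "snd p"] assms
    unfolding tendsto_at_iff_sequentially by simp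
  from tendsto_power[OF this, of 2] show ?thesis
    by (simp add: F_def G_def o_def)
qed

lemma G_meas[measurable]: "G \<in> borel_measurable M"
proof (rule borel_measurable_LIMSEQ_real[where u="\<lambda>i. F (1 / Suc i)"])
  show "(\<lambda>i. F (1 / real (Suc i)) p) \<longlonglongrightarrow> G p" for p
    by (rule F_lim[OF _ LIMSEQ_Suc[OF lim_1_over_n]]) simp
qed simp

definition "Rr = (SOME R. R \<ge> 0 \<and> K \<psi> \<subseteq> cball 0 R)"

lemma Rr: "Rr \<ge> 0" "K \<psi> \<subseteq> cball 0 Rr"
proof -
  have "bounded (K \<psi>)" using K_compact[OF psi] by (rule compact_imp_bounded)
  then obtain R where "\<forall>x\<in>K \<psi>. norm x \<le> R" by (auto simp: bounded_iff)
  then have "K \<psi> \<subseteq> cball 0 R" by auto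
  then have "\<exists>R. R \<ge> 0 \<and> K \<psi> \<subseteq> cball 0 R"
    by (intro exI[of _ "max R 0"]) (auto simp: subset_iff)
  then show "Rr \<ge> 0" "K \<psi> \<subseteq> cball 0 Rr" unfolding Rr_def by (metis (mono_tags, lifting) someI_ex)+
qed

definition "Cm = (SOME C. C \<ge> 0 \<and> (\<forall>x y. \<bar>\<psi> x - \<psi> y\<bar> \<le> C * norm (x - y)) \<and> (\<forall>x v. \<bar>Df \<psi> x v\<bar> \<le> C * norm v))"

lemma Cm: "Cm \<ge> 0" "\<And>x y. \<bar>\<psi> x - \<psi> y\<bar> \<le> Cm * norm (x - y)" "\<And>x v. \<bar>Df \<psi> x v\<bar> \<le> Cm * norm v"
proof -
  obtain C1 where C1: "C1 \<ge> 0" "\<forall>x y. \<bar>\<psi> x - \<psi> y\<bar> \<le> C1 * norm (x - y)" using psi_lip[OF psi] by blast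
  obtain C2 where C2: "C2 \<ge> 0" "\<forall>x v. \<bar>Df \<psi> x v\<bar> \<le> C2 * norm v" using psi_der_bounded[OF psi] by blast
  have "\<bar>\<psi> x - \<psi> y\<bar> \<le> max C1 C2 * norm (x - y)" for x y
    using C1(2)[rule_format, of x y] by (meson max.cobounded1 mult_right_mono norm_ge_zero order.trans)
  moreover have "\<bar>Df \<psi> x v\<bar> \<le> max C1 C2 * norm v" for x v
    using C2(2)[rule_format, of x v] by (meson max.cobounded2 mult_right_mono norm_ge_zero order.trans)
  ultimately have "\<exists>C. C \<ge> 0 \<and> (\<forall>x y. \<bar>\<psi> x - \<psi> y\<bar> \<le> C * norm (x - y)) \<and> (\<forall>x v. \<bar>Df \<psi> x v\<bar> \<le> C * norm v)"
    using C1(1) by (intro exI[of _ "max C1 C2"]) auto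
  from someI_ex[OF this] show "Cm \<ge> 0" "\<And>x y. \<bar>\<psi> x - \<psi> y\<bar> \<le> Cm * norm (x - y)" "\<And>x v. \<bar>Df \<psi> x v\<bar> \<le> Cm * norm v"
    unfolding Cm_def[symmetric] by auto
qed

definition "A = cball (0::'a) (Rr + 1) \<times> space a"
definition "w p = Cm\<^sup>2 * indicator A p"

lemma A_sets: "A \<in> sets M" unfolding A_def by (intro pair_measureI) auto

lemma w_int: "integrable M w"
proof -
  have "emeasure M A = emeasure lborel (cball (0::'a) (Rr + 1)) * emeasure a (space a)"
    unfolding A_def by (rule emeasure_pair_measure_Times) auto
  also have "\<dots> < \<infinity>" using emeasure_lborel_cball_finite[of "0::'a" "Rr+1"] fin by (simp add: ennreal_mult_less_top)
  finally have "integrable M (indicator A :: _ \<Rightarrow> real)" using A_sets by simp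
  then show ?thesis unfolding w_def by simp
qed

lemma w_meas[measurable]: "w \<in> borel_measurable M"
  using w_int by (rule borel_measurable_integrable)

lemma outside:
  assumes "x \<notin> cball 0 (Rr + 1)" "\<bar>r\<bar> \<le> 1" "norm v = 1"
  shows "\<psi> x = 0" "\<psi> (x + r *\<^sub>R v) = 0"
proof -
  have nx: "norm x > Rr + 1" using assms by simp
  have "x \<notin> K \<psi>" using Rr nx by auto
  then show "\<psi> x = 0" by (rule psi_zero[OF psi])
  have "norm (x + r *\<^sub>R v) \<ge> norm x - norm (r *\<^sub>R v)" using norm_triangle_ineq2[of x "- (r *\<^sub>R v)"] by simp
  moreover have "norm (r *\<^sub>R v) \<le> 1" using assms by simp
  ultimately have "norm (x + r *\<^sub>R v) > Rr" using nx by linarith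
  then have "x + r *\<^sub>R v \<notin> K \<psi>" using Rr by auto
  then show "\<psi> (x + r *\<^sub>R v) = 0" by (rule psi_zero[OF psi])
qed

lemma F_bound:
  assumes p: "p \<in> space M" and r: "\<bar>r\<bar> \<le> 1"
  shows "norm (F r p) \<le> w p"
proof -
  obtain x v where pv: "p = (x, v)" by (cases p)
  have nv: "norm v = 1" using p pv by (simp add: space_M)
  show ?thesis
  proof (cases "x \<in> cball 0 (Rr + 1)")
    case True
    have "F r p \<le> Cm\<^sup>2"
    proof (cases "r = 0")
      case False
      have "\<bar>\<psi> x - \<psi> (x + r *\<^sub>R v)\<bar> \<le> Cm * \<bar>r\<bar>"
        using Cm(2)[of x "x + r *\<^sub>R v"] nv by simp
      then have "\<bar>(\<psi> x - \<psi> (x + r *\<^sub>R v)) / r\<bar> \<le> Cm" using False by (simp add: divide_le_eq)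
      then have "((\<psi> x - \<psi> (x + r *\<^sub>R v)) / r)\<^sup>2 \<le> Cm\<^sup>2"
        by (metis abs_ge_zero power2_abs power_mono)
      then show ?thesis by (simp add: F_def pv)
    qed (simp add: F_def)
    moreover have "p \<in> A" using True p by (simp add: A_def pv space_M space_a)
    ultimately show ?thesis by (simp add: w_def F_def)
  next
    case False
    then have "F r p = 0" using outside[OF False r nv] by (simp add: F_def pv)
    then show ?thesis by (simp add: w_def)
  qed
qed

lemma G_bound:
  assumes p: "p \<in> space M"
  shows "norm (G p) \<le> w p"
proof -
  obtain x v where pv: "p = (x, v)" by (cases p)
  have nv: "norm v = 1" using p pv by (simp add: space_M)
  show ?thesis
  proof (cases "x \<in> cball 0 (Rr + 1)")
    case True
    have "\<bar>Df \<psi> x v\<bar> \<le> Cm" using Cm(3)[of x v] nv by simp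
    then have "G p \<le> Cm\<^sup>2" unfolding G_def pv by (metis abs_ge_zero power2_abs power_mono fst_conv snd_conv)
    moreover have "p \<in> A" using True p by (simp add: A_def pv space_M space_a)
    ultimately show ?thesis by (simp add: w_def G_def)
  next
    case False
    have "x \<notin> K \<psi>" using Rr False by auto
    then have "G p = 0" using psi_der_zero[OF psi] by (simp add: G_def pv)
    then show ?thesis by (simp add: w_def)
  qed
qed

lemma w_nonneg: "w p \<ge> 0" by (simp add: w_def)

lemma G_int: "integrable M G"
proof (rule Bochner_Integration.integrable_bound[OF w_int G_meas])
  show "AE p in M. norm (G p) \<le> norm (w p)"
  proof (rule AE_I2)
    fix p :: "'a \<times> 'a" assume "p \<in> space M"
    then have "norm (G p) \<le> w p" by (rule G_bound)
    then show "norm (G p) \<le> norm (w p)" using w_nonneg[of p] by simp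
  qed
qed

lemma F_int: "\<bar>r\<bar> \<le> 1 \<Longrightarrow> integrable M (F r)"
proof (rule Bochner_Integration.integrable_bound[OF w_int F_meas])
  assume r: "\<bar>r\<bar> \<le> 1"
  show "AE p in M. norm (F r p) \<le> norm (w p)"
  proof (rule AE_I2)
    fix p :: "'a \<times> 'a" assume "p \<in> space M"
    then have "norm (F r p) \<le> w p" using r by (rule F_bound)
    then show "norm (F r p) \<le> norm (w p)" using w_nonneg[of p] by simp
  qed
qed

lemma int_F_lim: "((\<lambda>r. integral\<^sup>L M (F r)) \<longlongrightarrow> integral\<^sup>L M G) (at 0)"
proof -
  have "((\<lambda>r. integral\<^sup>L M (F r)) \<longlongrightarrow> integral\<^sup>L M G) (at 0 within ball 0 1)"
    unfolding tendsto_at_iff_sequentially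
  proof (intro allI impI)
    fix X :: "nat \<Rightarrow> real" assume X: "\<forall>i. X i \<in> ball 0 1 - {0}" and X0: "X \<longlonglongrightarrow> 0"
    have Xb: "\<bar>X i\<bar> \<le> 1" "X i \<noteq> 0" for i using X[rule_format, of i] by (auto simp: dist_real_def)
    have "(\<lambda>i. integral\<^sup>L M (F (X i))) \<longlonglongrightarrow> integral\<^sup>L M G"
    proof (rule integral_dominated_convergence[OF G_meas F_meas w_int])
      show "AE p in M. (\<lambda>i. F (X i) p) \<longlonglongrightarrow> G p"
        by (rule AE_I2) (rule F_lim[OF Xb(2) X0])
      show "AE p in M. norm (F (X i) p) \<le> w p" for i
        by (rule AE_I2) (rule F_bound[OF _ Xb(1)])
    qed
    then show "((\<lambda>r. integral\<^sup>L M (F r)) \<circ> X) \<longlonglongrightarrow> integral\<^sup>L M G" by (simp only: o_def)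
  qed
  moreover have "at (0::real) within ball 0 1 = at 0" by (rule at_within_open) auto
  ultimately show ?thesis by simp
qed

lemma Q_F: "enn2real (Q \<psi> r) / r\<^sup>2 = integral\<^sup>L M (F r)"
proof -
  have m: "(\<lambda>p. (\<psi> (fst p) - \<psi> (fst p + r *\<^sub>R snd p))\<^sup>2) \<in> borel_measurable M" by measurable
  have "enn2real (Q \<psi> r) = integral\<^sup>L M (\<lambda>p. (\<psi> (fst p) - \<psi> (fst p + r *\<^sub>R snd p))\<^sup>2)"
    unfolding Q_def N2_def by (rule integral_eq_nn_integral[OF m, symmetric]) auto
  moreover have "F r = (\<lambda>p. (\<psi> (fst p) - \<psi> (fst p + r *\<^sub>R snd p))\<^sup>2 / r\<^sup>2)"
    by (rule ext) (simp add: F_def power_divide)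
  ultimately show ?thesis by simp
qed

lemma H_G: "H1a_sq_smooth a \<psi> = ennreal (integral\<^sup>L M G)"
proof -
  have m: "(\<lambda>p. ennreal (G p)) \<in> borel_measurable M" by measurable
  have "H1a_sq_smooth a \<psi> = (\<integral>\<^sup>+p. ennreal (G p) \<partial>M)"
    unfolding H1a_sq_smooth_def using nn_integral_fst[OF m] by (simp add: G_def)
  also have "\<dots> = ennreal (integral\<^sup>L M G)"
    by (rule nn_integral_eq_integral[OF G_int]) (simp add: G_def)
  finally show ?thesis .
qed

lemma smooth_H_fin: "H1a_sq_smooth a \<psi> < \<infinity>"
  using H_G by simp

lemma smooth_Q_lim: "((\<lambda>r. enn2real (Q \<psi> r) / r\<^sup>2) \<longlongrightarrow> enn2real (H1a_sq_smooth a \<psi>)) (at 0)"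
proof -
  have "integral\<^sup>L M G \<ge> 0" by (simp add: G_def)
  then have "enn2real (H1a_sq_smooth a \<psi>) = integral\<^sup>L M G" using H_G by simp
  then show ?thesis using int_F_lim by (simp add: Q_F)
qed

lemma smooth_qn_lim: "((\<lambda>r. qn \<psi> r / \<bar>r\<bar>) \<longlongrightarrow> sqrt (enn2real (H1a_sq_smooth a \<psi>))) (at 0)"
proof -
  have "(\<lambda>r. qn \<psi> r / \<bar>r\<bar>) = (\<lambda>r. sqrt (enn2real (Q \<psi> r) / r\<^sup>2))"
    by (rule ext) (simp add: qn_def real_sqrt_divide)
  then show ?thesis using tendsto_real_sqrt[OF smooth_Q_lim] by simp
qed

lemma smooth_qn_bound: "qn \<psi> r \<le> \<bar>r\<bar> * sqrt (enn2real (H1a_sq_smooth a \<psi>))"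
proof (cases "r = 0")
  case True then show ?thesis by (simp add: qn_zero)
next
  case False
  define X where "X n = r / real (Suc n)" for n
  have X0: "X \<longlonglongrightarrow> 0" unfolding X_def
    using tendsto_mult[OF tendsto_const[of r] LIMSEQ_inverse_real_of_nat] by (simp add: divide_inverse)
  have Xn: "X n \<noteq> 0" for n using False by (simp add: X_def)
  have "((\<lambda>r. qn \<psi> r / \<bar>r\<bar>) \<circ> X) \<longlonglongrightarrow> sqrt (enn2real (H1a_sq_smooth a \<psi>))"
    using smooth_qn_lim Xn X0 unfolding tendsto_at_iff_sequentially by simp
  then have lim: "(\<lambda>n. \<bar>r\<bar> * (qn \<psi> (X n) / \<bar>X n\<bar>)) \<longlonglongrightarrow> \<bar>r\<bar> * sqrt (enn2real (H1a_sq_smooth a \<psi>))"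
    by (intro tendsto_mult tendsto_const) (simp add: o_def)
  have "qn \<psi> r \<le> \<bar>r\<bar> * (qn \<psi> (X n) / \<bar>X n\<bar>)" for n
  proof -
    have "qn \<psi> (real (Suc n) * X n) \<le> real (Suc n) * qn \<psi> (X n)"
      by (rule qn_mult[OF smooth_L2fun[OF psi]])
    moreover have "real (Suc n) * X n = r" by (simp add: X_def)
    moreover have "\<bar>r\<bar> * (qn \<psi> (X n) / \<bar>X n\<bar>) = real (Suc n) * qn \<psi> (X n)"
    proof -
      have e: "\<bar>X n\<bar> = \<bar>r\<bar> / real (Suc n)" by (simp add: X_def)
      have "\<And>c q m::real. c \<noteq> 0 \<Longrightarrow> m \<noteq> 0 \<Longrightarrow> c * (q / (c / m)) = m * q" by simp
      then show ?thesis unfolding e using False by simp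
    qed
    ultimately show ?thesis by simp
  qed
  then show ?thesis using LIMSEQ_le_const[OF lim] by blast
qed

end

end


context spec
begin

lemma nz0: "\<forall>\<^sub>F r in at (0::real). r \<noteq> 0" by (simp add: eventually_at_filter)

definition Hs :: "('a \<Rightarrow> real) \<Rightarrow> real" where "Hs \<psi> = enn2real (H1a_sq_smooth a \<psi>)"

lemma Hs_nonneg: "Hs \<psi> \<ge> 0" by (simp add: Hs_def)

lemma qn_bound_from_lim:
  assumes g: "L2fun g" and lim: "((\<lambda>r. qn g r / \<bar>r\<bar>) \<longlongrightarrow> l) (at 0)"
  shows "qn g r \<le> \<bar>r\<bar> * l"
proof (cases "r = 0")
  case True then show ?thesis by (simp add: qn_zero)
next
  case False
  define X where "X n = r / real (Suc n)" for n
  have X0: "X \<longlonglongrightarrow> 0" unfolding X_def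
    using tendsto_mult[OF tendsto_const[of r] LIMSEQ_inverse_real_of_nat] by (simp add: divide_inverse)
  have Xn: "X n \<noteq> 0" for n using False by (simp add: X_def)
  have "((\<lambda>r. qn g r / \<bar>r\<bar>) \<circ> X) \<longlonglongrightarrow> l"
    using lim Xn X0 unfolding tendsto_at_iff_sequentially by simp
  then have lim2: "(\<lambda>n. \<bar>r\<bar> * (qn g (X n) / \<bar>X n\<bar>)) \<longlonglongrightarrow> \<bar>r\<bar> * l"
    by (intro tendsto_mult tendsto_const) (simp only: o_def)
  have "qn g r \<le> \<bar>r\<bar> * (qn g (X n) / \<bar>X n\<bar>)" for n
  proof -
    have "qn g (real (Suc n) * X n) \<le> real (Suc n) * qn g (X n)"
      by (rule qn_mult[OF g])
    moreover have "real (Suc n) * X n = r" by (simp add: X_def)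
    moreover have "\<bar>r\<bar> * (qn g (X n) / \<bar>X n\<bar>) = real (Suc n) * qn g (X n)"
    proof -
      have e: "\<bar>X n\<bar> = \<bar>r\<bar> / real (Suc n)" by (simp add: X_def)
      have "\<And>c q m::real. c \<noteq> 0 \<Longrightarrow> m \<noteq> 0 \<Longrightarrow> c * (q / (c / m)) = m * q" by simp
      then show ?thesis unfolding e using False by simp
    qed
    ultimately show ?thesis by simp
  qed
  then show ?thesis using LIMSEQ_le_const[OF lim2] by blast
qed

context
  fixes u :: "'a \<Rightarrow> real" and \<phi> :: "nat \<Rightarrow> 'a \<Rightarrow> real"
  assumes um: "u \<in> borel_measurable lborel"
    and ap: "H1a0_approx a u \<phi>"
begin

lemma phi_Cc: "\<phi> k \<in> Cc_inf" using ap by (simp add: H1a0_approx_def)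

lemma phi_L2: "L2fun (\<phi> k)" using smooth_L2fun[OF phi_Cc] .

lemma dist_lim: "(\<lambda>k. L2_dist_sq (\<phi> k) u) \<longlonglongrightarrow> 0" using ap by (simp add: H1a0_approx_def)

lemma L2_dist_N2: "L2_dist_sq (\<phi> k) u = N2 lborel (\<lambda>x. u x - \<phi> k x)"
proof -
  have "\<And>x. (\<phi> k x - u x)\<^sup>2 = (u x - \<phi> k x)\<^sup>2" by (simp add: power2_commute)
  then show ?thesis by (simp add: L2_dist_sq_def N2_def)
qed

lemma u_L2: "L2fun u"
proof -
  have "\<forall>\<^sub>F k in sequentially. L2_dist_sq (\<phi> k) u < 1"
    using dist_lim by (rule order_tendstoD) simp
  then obtain k where k: "L2_dist_sq (\<phi> k) u < 1" by (meson eventually_sequentially order_refl)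
  have "N2 lborel (\<lambda>x. u x - \<phi> k x) < \<infinity>"
  proof -
    have "N2 lborel (\<lambda>x. u x - \<phi> k x) < 1" using k L2_dist_N2[of k] by simp
    also have "(1::ennreal) < \<infinity>" by simp
    finally show ?thesis .
  qed
  moreover have "(\<lambda>x. u x - \<phi> k x) \<in> borel_measurable borel"
  proof -
    have [measurable]: "u \<in> borel_measurable borel" "\<phi> k \<in> borel_measurable borel"
      using um phi_L2[of k] by (simp_all add: L2fun_def measurable_lborel1)
    show ?thesis by measurable
  qed
  ultimately have d: "L2fun (\<lambda>x. u x - \<phi> k x)" by (simp add: L2fun_def)
  have "L2fun (\<lambda>x. (u x - \<phi> k x) + \<phi> k x)" by (rule L2fun_add[OF d phi_L2])
  then show ?thesis by simp
qed

lemma diff_Cc: "(\<lambda>x. \<phi> m x - \<phi> k x) \<in> Cc_inf"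
  by (rule Cc_inf_minus[OF phi_Cc phi_Cc])

lemma cauchy_H: "e > 0 \<Longrightarrow> \<exists>N. \<forall>m\<ge>N. \<forall>k\<ge>N. Hs (\<lambda>x. \<phi> m x - \<phi> k x) < e"
proof -
  assume e: "e > 0"
  from ap e obtain N where N: "\<forall>m\<ge>N. \<forall>k\<ge>N. H1a_sq_smooth a (\<lambda>x. \<phi> m x - \<phi> k x) + L2_dist_sq (\<phi> m) (\<phi> k) < ennreal e"
    unfolding H1a0_approx_def by blast
  have "Hs (\<lambda>x. \<phi> m x - \<phi> k x) < e" if "m \<ge> N" "k \<ge> N" for m k
  proof -
    have "H1a_sq_smooth a (\<lambda>x. \<phi> m x - \<phi> k x) \<le> H1a_sq_smooth a (\<lambda>x. \<phi> m x - \<phi> k x) + L2_dist_sq (\<phi> m) (\<phi> k)"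
      by simp
    also have "\<dots> < ennreal e" using N that by blast
    finally have lt: "H1a_sq_smooth a (\<lambda>x. \<phi> m x - \<phi> k x) < ennreal e" .
    have "H1a_sq_smooth a (\<lambda>x. \<phi> m x - \<phi> k x) = ennreal (Hs (\<lambda>x. \<phi> m x - \<phi> k x))"
      unfolding Hs_def using smooth_H_fin[OF diff_Cc] by simp
    then show ?thesis using lt Hs_nonneg by (simp add: ennreal_less_iff)
  qed
  then show ?thesis by blast
qed

lemma qn_diff_smooth: "qn (\<lambda>x. \<phi> m x - \<phi> k x) r \<le> \<bar>r\<bar> * sqrt (Hs (\<lambda>x. \<phi> m x - \<phi> k x))"
  unfolding Hs_def by (rule smooth_qn_bound[OF diff_Cc])

lemma qn_u_close:
  assumes e: "e > 0" and N: "\<forall>m\<ge>N. \<forall>k\<ge>N. Hs (\<lambda>x. \<phi> m x - \<phi> k x) < e" and k: "k \<ge> N"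
  shows "qn (\<lambda>x. u x - \<phi> k x) r \<le> \<bar>r\<bar> * sqrt e"
proof -
  define d where "d m = enn2real (N2 lborel (\<lambda>x. u x - \<phi> m x))" for m
  have d0: "d \<longlonglongrightarrow> 0"
    unfolding d_def L2_dist_N2[symmetric] using tendsto_enn2real[of _ 0] dist_lim by simp
  have lim: "(\<lambda>m. 2 * sqrt (ma * d m) + \<bar>r\<bar> * sqrt e) \<longlonglongrightarrow> 2 * sqrt (ma * 0) + \<bar>r\<bar> * sqrt e"
    by (intro tendsto_intros d0)
  have "qn (\<lambda>x. u x - \<phi> k x) r \<le> 2 * sqrt (ma * d m) + \<bar>r\<bar> * sqrt e" if m: "m \<ge> N" for m
  proof -
    have L1: "L2fun (\<lambda>x. u x - \<phi> m x)" by (rule L2fun_diff[OF u_L2 phi_L2])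
    have L2: "L2fun (\<lambda>x. \<phi> m x - \<phi> k x)" by (rule L2fun_diff[OF phi_L2 phi_L2])
    have "qn (\<lambda>x. (u x - \<phi> m x) + (\<phi> m x - \<phi> k x)) r \<le> qn (\<lambda>x. u x - \<phi> m x) r + qn (\<lambda>x. \<phi> m x - \<phi> k x) r"
      by (rule qn_add[OF L1 L2])
    moreover have "qn (\<lambda>x. u x - \<phi> m x) r \<le> 2 * sqrt (ma * d m)"
      unfolding d_def by (rule Q_L2(2)[OF L1])
    moreover have "qn (\<lambda>x. \<phi> m x - \<phi> k x) r \<le> \<bar>r\<bar> * sqrt e"
    proof -
      have "Hs (\<lambda>x. \<phi> m x - \<phi> k x) < e" using N m k by blast
      then have "sqrt (Hs (\<lambda>x. \<phi> m x - \<phi> k x)) \<le> sqrt e" by simp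
      then have "\<bar>r\<bar> * sqrt (Hs (\<lambda>x. \<phi> m x - \<phi> k x)) \<le> \<bar>r\<bar> * sqrt e" by (rule mult_left_mono) simp
      then show ?thesis using qn_diff_smooth[of m k r] by linarith
    qed
    ultimately show ?thesis by simp
  qed
  then have "qn (\<lambda>x. u x - \<phi> k x) r \<le> 2 * sqrt (ma * 0) + \<bar>r\<bar> * sqrt e"
    using LIMSEQ_le_const[OF lim] by blast
  then show ?thesis by simp
qed

definition "sH k = sqrt (Hs (\<phi> k))"

lemma sH_lim: "((\<lambda>r. qn (\<phi> k) r / \<bar>r\<bar>) \<longlongrightarrow> sH k) (at 0)"
  unfolding sH_def Hs_def by (rule smooth_qn_lim[OF phi_Cc])

lemma sH_diff: "\<bar>sH m - sH k\<bar> \<le> sqrt (Hs (\<lambda>x. \<phi> m x - \<phi> k x))"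
proof -
  have lim: "((\<lambda>r. \<bar>qn (\<phi> m) r / \<bar>r\<bar> - qn (\<phi> k) r / \<bar>r\<bar>\<bar>) \<longlongrightarrow> \<bar>sH m - sH k\<bar>) (at 0)"
    by (intro tendsto_intros sH_lim)
  have ev: "\<forall>\<^sub>F r in at 0. \<bar>qn (\<phi> m) r / \<bar>r\<bar> - qn (\<phi> k) r / \<bar>r\<bar>\<bar> \<le> sqrt (Hs (\<lambda>x. \<phi> m x - \<phi> k x))"
  proof (rule eventually_mono[OF nz0])
    fix r :: real assume r: "r \<noteq> 0"
    have "\<bar>qn (\<phi> m) r - qn (\<phi> k) r\<bar> \<le> qn (\<lambda>x. \<phi> m x - \<phi> k x) r"
      by (rule qn_rev[OF phi_L2 phi_L2])
    also have "\<dots> \<le> \<bar>r\<bar> * sqrt (Hs (\<lambda>x. \<phi> m x - \<phi> k x))" by (rule qn_diff_smooth)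
    finally have "\<bar>qn (\<phi> m) r - qn (\<phi> k) r\<bar> / \<bar>r\<bar> \<le> sqrt (Hs (\<lambda>x. \<phi> m x - \<phi> k x))"
      using r by (simp add: divide_le_eq mult.commute)
    then show "\<bar>qn (\<phi> m) r / \<bar>r\<bar> - qn (\<phi> k) r / \<bar>r\<bar>\<bar> \<le> sqrt (Hs (\<lambda>x. \<phi> m x - \<phi> k x))"
      by (simp add: diff_divide_distrib[symmetric] abs_divide)
  qed
  show ?thesis by (rule tendsto_le[OF _ tendsto_const lim ev]) simp
qed

lemma sH_Cauchy: "Cauchy sH"
proof (rule metric_CauchyI)
  fix e :: real assume e: "e > 0"
  then obtain N where N: "\<forall>m\<ge>N. \<forall>k\<ge>N. Hs (\<lambda>x. \<phi> m x - \<phi> k x) < e\<^sup>2" using cauchy_H[of "e\<^sup>2"] by auto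
  have "dist (sH m) (sH k) < e" if "m \<ge> N" "k \<ge> N" for m k
  proof -
    have "dist (sH m) (sH k) \<le> sqrt (Hs (\<lambda>x. \<phi> m x - \<phi> k x))" using sH_diff by (simp add: dist_real_def)
    also have "\<dots> < sqrt (e\<^sup>2)"
    proof -
      have "Hs (\<lambda>x. \<phi> m x - \<phi> k x) < e\<^sup>2" using N that by blast
      then show ?thesis by (rule real_sqrt_less_mono)
    qed
    finally show ?thesis using e by simp
  qed
  then show "\<exists>M. \<forall>m\<ge>M. \<forall>n\<ge>M. dist (sH m) (sH n) < e" by blast
qed

definition "ell = lim sH"

lemma sH_conv: "sH \<longlonglongrightarrow> ell"
  using sH_Cauchy unfolding ell_def by (simp add: Cauchy_convergent_iff convergent_LIMSEQ_iff)

lemma u_qn_lim: "((\<lambda>r. qn u r / \<bar>r\<bar>) \<longlongrightarrow> ell) (at 0)"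
proof (rule tendstoI)
  fix e :: real assume e: "e > 0"
  define e1 where "e1 = (e / 4)\<^sup>2"
  have e1: "e1 > 0" "sqrt e1 = e / 4" using e by (simp_all add: e1_def)
  obtain N where N: "\<forall>m\<ge>N. \<forall>k\<ge>N. Hs (\<lambda>x. \<phi> m x - \<phi> k x) < e1" using cauchy_H[OF e1(1)] by auto
  have "\<forall>\<^sub>F k in sequentially. dist (sH k) ell < e / 4" by (rule tendstoD[OF sH_conv]) (use e in simp)
  then obtain k where k: "k \<ge> N" "dist (sH k) ell < e / 4"
    by (metis (no_types, lifting) eventually_sequentially nle_le)
  have ev1: "\<forall>\<^sub>F r in at 0. dist (qn (\<phi> k) r / \<bar>r\<bar>) (sH k) < e / 4"
    by (rule tendstoD[OF sH_lim]) (use e in simp)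
  show "\<forall>\<^sub>F r in at 0. dist (qn u r / \<bar>r\<bar>) ell < e"
  proof (rule eventually_mono[OF eventually_conj[OF ev1 nz0]])
    fix r :: real assume Ar: "dist (qn (\<phi> k) r / \<bar>r\<bar>) (sH k) < e / 4 \<and> r \<noteq> 0"
    then have A: "dist (qn (\<phi> k) r / \<bar>r\<bar>) (sH k) < e / 4" and r: "r \<noteq> 0" by auto
    have "\<bar>qn u r - qn (\<phi> k) r\<bar> \<le> qn (\<lambda>x. u x - \<phi> k x) r"
      by (rule qn_rev[OF u_L2 phi_L2])
    also have "\<dots> \<le> \<bar>r\<bar> * (e / 4)" using qn_u_close[OF e1(1) N k(1)] e1(2) by simp
    finally have "\<bar>qn u r - qn (\<phi> k) r\<bar> / \<bar>r\<bar> \<le> e / 4"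
      using r by (simp add: divide_le_eq mult.commute)
    then have B: "\<bar>qn u r / \<bar>r\<bar> - qn (\<phi> k) r / \<bar>r\<bar>\<bar> \<le> e / 4"
      by (simp add: diff_divide_distrib[symmetric] abs_divide)
    show "dist (qn u r / \<bar>r\<bar>) ell < e"
      using A B k(2) e unfolding dist_real_def by linarith
  qed
qed

lemma ell_nonneg: "ell \<ge> 0"
  by (rule LIMSEQ_le_const[OF sH_conv]) (simp add: sH_def Hs_nonneg)

lemma H_lim: "(\<lambda>k. H1a_sq_smooth a (\<phi> k)) \<longlonglongrightarrow> ennreal (ell\<^sup>2)"
proof -
  have e: "H1a_sq_smooth a (\<phi> k) = ennreal ((sH k)\<^sup>2)" for k
    using smooth_H_fin[OF phi_Cc, of k] Hs_nonneg[of "\<phi> k"] by (simp add: sH_def Hs_def)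
  show ?thesis unfolding e by (intro tendsto_ennrealI tendsto_power sH_conv)
qed

end

end


lemma nn_reflect:
  fixes g :: "real \<Rightarrow> ennreal"
  assumes [measurable]: "g \<in> borel_measurable borel"
  shows "(\<integral>\<^sup>+x. g (- x) \<partial>lborel) = (\<integral>\<^sup>+x. g x \<partial>lborel)"
proof -
  have "(\<integral>\<^sup>+x. g x \<partial>lborel) = (\<integral>\<^sup>+x. g x \<partial>distr lborel borel uminus)"
    by (simp add: lborel_distr_uminus)
  also have "\<dots> = (\<integral>\<^sup>+x. g (- x) \<partial>lborel)"
    by (subst nn_integral_distr) auto
  finally show ?thesis by simp
qed

lemma J_half1:
  assumes s: "s < 1" and d: "d > 0"
  shows "(\<integral>\<^sup>+x. ennreal (\<bar>x\<bar> powr (1 - 2 * s)) * indicator {0..d} x \<partial>lborel) = ennreal (d powr (2 - 2 * s) / (2 - 2 * s))"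
proof -
  have "((\<lambda>x. x powr (1 - 2 * s)) has_integral (d powr ((1 - 2 * s) + 1) / ((1 - 2 * s) + 1))) {0..d}"
    by (rule has_integral_powr_from_0) (use s d in auto)
  then have "((\<lambda>x. \<bar>x\<bar> powr (1 - 2 * s)) has_integral (d powr (2 - 2 * s) / (2 - 2 * s))) {0..d}"
    by (subst has_integral_cong[where g="\<lambda>x. x powr (1 - 2 * s)"]) (auto simp: algebra_simps)
  from nn_integral_has_integral_lebesgue'[OF _ this] show ?thesis by simp
qed

lemma J_half2:
  assumes s: "s > 0" and d: "d > 0"
  shows "(\<integral>\<^sup>+x. ennreal (\<bar>x\<bar> powr (- 1 - 2 * s)) * indicator {d..} x \<partial>lborel) = ennreal (d powr (- 2 * s) / (2 * s))"
proof -
  have "((\<lambda>x. x powr (- 1 - 2 * s)) has_integral (-(d powr ((- 1 - 2 * s) + 1)) / ((- 1 - 2 * s) + 1))) {d..}"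
    by (rule has_integral_powr_to_inf) (use s d in auto)
  then have "((\<lambda>x. \<bar>x\<bar> powr (- 1 - 2 * s)) has_integral (d powr (- 2 * s) / (2 * s))) {d..}"
    by (subst has_integral_cong[where g="\<lambda>x. x powr (- 1 - 2 * s)"]) (use d in \<open>auto simp: algebra_simps\<close>)
  from nn_integral_has_integral_lebesgue'[OF _ this] show ?thesis by simp
qed

lemma even_split:
  fixes h :: "real \<Rightarrow> real" and S T :: "real set"
  assumes [measurable]: "h \<in> borel_measurable borel" "S \<in> sets borel" "T \<in> sets borel"
    and pt: "\<And>x. ennreal (h x) * indicator S x = ennreal (h x) * indicator T x + ennreal (h (-x)) * indicator T (-x)"
  shows "(\<integral>\<^sup>+x. ennreal (h x) * indicator S x \<partial>lborel) = 2 * (\<integral>\<^sup>+x. ennreal (h x) * indicator T x \<partial>lborel)"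
proof -
  have "(\<integral>\<^sup>+x. ennreal (h x) * indicator S x \<partial>lborel) =
    (\<integral>\<^sup>+x. ennreal (h x) * indicator T x \<partial>lborel) + (\<integral>\<^sup>+x. ennreal (h (-x)) * indicator T (-x) \<partial>lborel)"
    unfolding pt by (rule nn_integral_add) auto
  also have "(\<integral>\<^sup>+x. ennreal (h (-x)) * indicator T (-x) \<partial>lborel) = (\<integral>\<^sup>+x. ennreal (h x) * indicator T x \<partial>lborel)"
    by (rule nn_reflect[where g="\<lambda>x. ennreal (h x) * indicator T x"]) simp
  finally show ?thesis by (simp add: mult_2)
qed

lemma J1:
  assumes s: "0 < s" "s < 1" and d: "d > 0"
  shows "(\<integral>\<^sup>+x. ennreal (\<bar>x\<bar> powr (1 - 2 * s)) * indicator {x. \<bar>x\<bar> \<le> d} x \<partial>lborel) = ennreal (d powr (2 - 2 * s) / (1 - s))"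
proof -
  have "(\<integral>\<^sup>+x. ennreal (\<bar>x\<bar> powr (1 - 2 * s)) * indicator {x. \<bar>x\<bar> \<le> d} x \<partial>lborel)
     = 2 * (\<integral>\<^sup>+x. ennreal (\<bar>x\<bar> powr (1 - 2 * s)) * indicator {0..d} x \<partial>lborel)"
  proof (rule even_split)
    show "{x. \<bar>x\<bar> \<le> d} \<in> sets borel" by measurable
    fix x :: real
    show "ennreal (\<bar>x\<bar> powr (1 - 2 * s)) * indicator {x. \<bar>x\<bar> \<le> d} x =
          ennreal (\<bar>x\<bar> powr (1 - 2 * s)) * indicator {0..d} x + ennreal (\<bar>- x\<bar> powr (1 - 2 * s)) * indicator {0..d} (- x)"
      by (cases "x = 0"; cases "x > 0") (auto simp: indicator_def)
  qed simp_all
  also have "\<dots> = ennreal 2 * ennreal (d powr (2 - 2 * s) / (2 - 2 * s))" using J_half1[OF s(2) d] by simp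
  also have "\<dots> = ennreal (d powr (2 - 2 * s) / (1 - s))"
    using s by (subst ennreal_mult[symmetric]) (auto simp: field_simps)
  finally show ?thesis .
qed

lemma J2:
  assumes s: "0 < s" and d: "d > 0"
  shows "(\<integral>\<^sup>+x. ennreal (\<bar>x\<bar> powr (- 1 - 2 * s)) * indicator {x. d \<le> \<bar>x\<bar>} x \<partial>lborel) = ennreal (d powr (- 2 * s) / s)"
proof -
  have "(\<integral>\<^sup>+x. ennreal (\<bar>x\<bar> powr (- 1 - 2 * s)) * indicator {x. d \<le> \<bar>x\<bar>} x \<partial>lborel)
     = 2 * (\<integral>\<^sup>+x. ennreal (\<bar>x\<bar> powr (- 1 - 2 * s)) * indicator {d..} x \<partial>lborel)"
  proof (rule even_split)
    show "{x. d \<le> \<bar>x\<bar>} \<in> sets borel" by measurable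
    fix x :: real
    show "ennreal (\<bar>x\<bar> powr (- 1 - 2 * s)) * indicator {x. d \<le> \<bar>x\<bar>} x =
          ennreal (\<bar>x\<bar> powr (- 1 - 2 * s)) * indicator {d..} x + ennreal (\<bar>- x\<bar> powr (- 1 - 2 * s)) * indicator {d..} (- x)"
      using d by (cases "x > 0") (auto simp: indicator_def)
  qed simp_all
  also have "\<dots> = ennreal 2 * ennreal (d powr (- 2 * s) / (2 * s))" using J_half2[OF s d] by simp
  also have "\<dots> = ennreal (d powr (- 2 * s) / s)"
    using s by (subst ennreal_mult[symmetric]) (auto simp: field_simps)
  finally show ?thesis .
qed


lemma rho_sq_powr: "(\<rho>::real) \<noteq> 0 \<Longrightarrow> \<rho>\<^sup>2 / \<bar>\<rho>\<bar> powr (1 + 2 * s) = \<bar>\<rho>\<bar> powr (1 - 2 * s)"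
proof -
  assume r: "\<rho> \<noteq> 0"
  have "\<bar>\<rho>\<bar> powr (1 - 2 * s) = \<bar>\<rho>\<bar> powr (2 - (1 + 2 * s))" by (simp add: algebra_simps)
  also have "\<dots> = \<bar>\<rho>\<bar> powr 2 / \<bar>\<rho>\<bar> powr (1 + 2 * s)" by (rule powr_diff)
  also have "\<bar>\<rho>\<bar> powr 2 = \<rho>\<^sup>2" using r powr_realpow[of "\<bar>\<rho>\<bar>" 2] by simp
  finally show ?thesis by simp
qed

lemma inv_powr: "(1::real) / \<bar>\<rho>\<bar> powr (1 + 2 * s) = \<bar>\<rho>\<bar> powr (- 1 - 2 * s)"
  using powr_minus_divide[of "\<bar>\<rho>\<bar>" "1 + 2 * s"] by (simp add: algebra_simps)

lemma pw_upper:
  fixes q \<rho> :: real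
  assumes d: "d > 0" and C: "C \<ge> 0" and q0: "q \<ge> 0" and qB: "q \<le> B" and qC: "\<bar>\<rho>\<bar> \<le> d \<Longrightarrow> q \<le> C * \<rho>\<^sup>2"
  shows "q / \<bar>\<rho>\<bar> powr (1 + 2 * s) \<le> C * (\<bar>\<rho>\<bar> powr (1 - 2 * s) * indicator {x. \<bar>x\<bar> \<le> d} \<rho>) + B * (\<bar>\<rho>\<bar> powr (- 1 - 2 * s) * indicator {x. d \<le> \<bar>x\<bar>} \<rho>)"
proof -
  have B: "B \<ge> 0" using q0 qB by simp
  have R0: "0 \<le> C * (\<bar>\<rho>\<bar> powr (1 - 2 * s) * indicator {x. \<bar>x\<bar> \<le> d} \<rho>)"
       "0 \<le> B * (\<bar>\<rho>\<bar> powr (- 1 - 2 * s) * indicator {x. d \<le> \<bar>x\<bar>} \<rho>)"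
    using B C by (simp_all add: indicator_def)
  show ?thesis
  proof (cases "\<rho> = 0")
    case True then show ?thesis using R0 by simp
  next
    case False
    show ?thesis
    proof (cases "\<bar>\<rho>\<bar> \<le> d")
      case True
      have "q / \<bar>\<rho>\<bar> powr (1 + 2 * s) \<le> C * \<rho>\<^sup>2 / \<bar>\<rho>\<bar> powr (1 + 2 * s)"
        using qC[OF True] by (simp add: divide_right_mono)
      also have "\<dots> = C * (\<rho>\<^sup>2 / \<bar>\<rho>\<bar> powr (1 + 2 * s))" by simp
      also have "\<dots> = C * \<bar>\<rho>\<bar> powr (1 - 2 * s)" using rho_sq_powr[OF False, of s] by simp
      finally show ?thesis using True R0(2) by (simp add: indicator_def)
    next
      case False': False
      have "q / \<bar>\<rho>\<bar> powr (1 + 2 * s) \<le> B / \<bar>\<rho>\<bar> powr (1 + 2 * s)"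
        using qB by (simp add: divide_right_mono)
      also have "\<dots> = B * \<bar>\<rho>\<bar> powr (- 1 - 2 * s)" using inv_powr[of \<rho> s] by (simp add: divide_inverse mult.commute)
      finally show ?thesis using False' R0(1) by (simp add: indicator_def)
    qed
  qed
qed

lemma pw_lower:
  fixes q \<rho> :: real
  assumes c: "c \<ge> 0" and q0: "q \<ge> 0" and qc: "\<bar>\<rho>\<bar> \<le> d \<Longrightarrow> c * \<rho>\<^sup>2 \<le> q"
  shows "c * (\<bar>\<rho>\<bar> powr (1 - 2 * s) * indicator {x. \<bar>x\<bar> \<le> d} \<rho>) \<le> q / \<bar>\<rho>\<bar> powr (1 + 2 * s)"
proof (cases "\<rho> = 0")
  case True then show ?thesis by simp
next
  case False
  show ?thesis
  proof (cases "\<bar>\<rho>\<bar> \<le> d")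
    case True
    have "c * \<bar>\<rho>\<bar> powr (1 - 2 * s) = c * (\<rho>\<^sup>2 / \<bar>\<rho>\<bar> powr (1 + 2 * s))"
      using rho_sq_powr[OF False, of s] by simp
    also have "\<dots> = c * \<rho>\<^sup>2 / \<bar>\<rho>\<bar> powr (1 + 2 * s)" by simp
    also have "\<dots> \<le> q / \<bar>\<rho>\<bar> powr (1 + 2 * s)"
      using qc[OF True] by (simp add: divide_right_mono)
    finally show ?thesis using True by (simp add: indicator_def)
  next
    case False
    then show ?thesis using q0 by (simp add: indicator_def)
  qed
qed

definition Iq :: "(real \<Rightarrow> real) \<Rightarrow> real \<Rightarrow> ennreal" where
  "Iq q s = (\<integral>\<^sup>+\<rho>. ennreal (q \<rho>) * ennreal (1 / \<bar>\<rho>\<bar> powr (1 + 2 * s)) \<partial>lborel)"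

lemma Iq_pt: "q \<rho> \<ge> 0 \<Longrightarrow> ennreal (q \<rho>) * ennreal (1 / \<bar>\<rho>\<bar> powr (1 + 2 * s)) = ennreal (q \<rho> / \<bar>\<rho>\<bar> powr (1 + 2 * s))"
  by (subst ennreal_mult[symmetric]) (auto simp: divide_inverse)

lemma I_upper:
  fixes q :: "real \<Rightarrow> real"
  assumes s: "0 < s" "s < 1" and d: "d > 0" and C: "C \<ge> 0" and q0: "\<And>\<rho>. q \<rho> \<ge> 0" and qB: "\<And>\<rho>. q \<rho> \<le> B"
    and qC: "\<And>\<rho>. \<bar>\<rho>\<bar> \<le> d \<Longrightarrow> q \<rho> \<le> C * \<rho>\<^sup>2"
  shows "Iq q s \<le> ennreal (C * (d powr (2 - 2 * s) / (1 - s)) + B * (d powr (- 2 * s) / s))"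
proof -
  have B: "B \<ge> 0" using q0[of 0] qB[of 0] by simp
  have "Iq q s \<le> (\<integral>\<^sup>+\<rho>. ennreal C * (ennreal (\<bar>\<rho>\<bar> powr (1 - 2 * s)) * indicator {x. \<bar>x\<bar> \<le> d} \<rho>)
      + ennreal B * (ennreal (\<bar>\<rho>\<bar> powr (- 1 - 2 * s)) * indicator {x. d \<le> \<bar>x\<bar>} \<rho>) \<partial>lborel)"
    unfolding Iq_def
  proof (rule nn_integral_mono)
    fix \<rho> :: real
    have "ennreal (q \<rho>) * ennreal (1 / \<bar>\<rho>\<bar> powr (1 + 2 * s)) = ennreal (q \<rho> / \<bar>\<rho>\<bar> powr (1 + 2 * s))"
      by (rule Iq_pt[of q \<rho> s, OF q0[of \<rho>]])
    also have "\<dots> \<le> ennreal (C * (\<bar>\<rho>\<bar> powr (1 - 2 * s) * indicator {x. \<bar>x\<bar> \<le> d} \<rho>) + B * (\<bar>\<rho>\<bar> powr (- 1 - 2 * s) * indicator {x. d \<le> \<bar>x\<bar>} \<rho>))"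
      by (rule ennreal_leI, rule pw_upper[OF d C q0 qB qC])
    also have "\<dots> = ennreal C * (ennreal (\<bar>\<rho>\<bar> powr (1 - 2 * s)) * indicator {x. \<bar>x\<bar> \<le> d} \<rho>)
      + ennreal B * (ennreal (\<bar>\<rho>\<bar> powr (- 1 - 2 * s)) * indicator {x. d \<le> \<bar>x\<bar>} \<rho>)"
      using B C by (subst ennreal_plus) (auto simp: ennreal_mult indicator_def)
    finally show "ennreal (q \<rho>) * ennreal (1 / \<bar>\<rho>\<bar> powr (1 + 2 * s)) \<le> \<dots>" .
  qed
  also have "\<dots> = ennreal C * (\<integral>\<^sup>+\<rho>. ennreal (\<bar>\<rho>\<bar> powr (1 - 2 * s)) * indicator {x. \<bar>x\<bar> \<le> d} \<rho> \<partial>lborel)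
      + ennreal B * (\<integral>\<^sup>+\<rho>. ennreal (\<bar>\<rho>\<bar> powr (- 1 - 2 * s)) * indicator {x. d \<le> \<bar>x\<bar>} \<rho> \<partial>lborel)"
    by (subst nn_integral_add) (auto simp: nn_integral_cmult)
  also have "\<dots> = ennreal C * ennreal (d powr (2 - 2 * s) / (1 - s)) + ennreal B * ennreal (d powr (- 2 * s) / s)"
    by (simp add: J1[OF s d] J2[OF s(1) d])
  also have "\<dots> = ennreal (C * (d powr (2 - 2 * s) / (1 - s)) + B * (d powr (- 2 * s) / s))"
  proof -
    have n1: "0 \<le> C * (d powr (2 - 2 * s) / (1 - s))" using C s by simp
    have n2: "0 \<le> B * (d powr (- 2 * s) / s)" using B s by simp
    have e1: "ennreal (C * (d powr (2 - 2 * s) / (1 - s))) = ennreal C * ennreal (d powr (2 - 2 * s) / (1 - s))"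
      by (rule ennreal_mult) (use C s in auto)
    have e2: "ennreal (B * (d powr (- 2 * s) / s)) = ennreal B * ennreal (d powr (- 2 * s) / s)"
      by (rule ennreal_mult) (use B s in auto)
    have e3: "ennreal (C * (d powr (2 - 2 * s) / (1 - s)) + B * (d powr (- 2 * s) / s))
       = ennreal (C * (d powr (2 - 2 * s) / (1 - s))) + ennreal (B * (d powr (- 2 * s) / s))"
      by (rule ennreal_plus[OF n1 n2])
    show ?thesis by (simp only: e1 e2 e3)
  qed
  finally show ?thesis .
qed

lemma I_lower:
  fixes q :: "real \<Rightarrow> real"
  assumes s: "0 < s" "s < 1" and d: "d > 0" and c: "c \<ge> 0" and q0: "\<And>\<rho>. q \<rho> \<ge> 0"
    and qc: "\<And>\<rho>. \<bar>\<rho>\<bar> \<le> d \<Longrightarrow> c * \<rho>\<^sup>2 \<le> q \<rho>"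
  shows "ennreal (c * (d powr (2 - 2 * s) / (1 - s))) \<le> Iq q s"
proof -
  have "ennreal (c * (d powr (2 - 2 * s) / (1 - s))) = ennreal c * ennreal (d powr (2 - 2 * s) / (1 - s))"
    by (subst ennreal_mult[symmetric]) (use c s in auto)
  also have "\<dots> = (\<integral>\<^sup>+\<rho>. ennreal c * (ennreal (\<bar>\<rho>\<bar> powr (1 - 2 * s)) * indicator {x. \<bar>x\<bar> \<le> d} \<rho>) \<partial>lborel)"
    by (simp add: J1[OF s d] nn_integral_cmult)
  also have "\<dots> \<le> Iq q s"
    unfolding Iq_def
  proof (rule nn_integral_mono)
    fix \<rho> :: real
    have "ennreal c * (ennreal (\<bar>\<rho>\<bar> powr (1 - 2 * s)) * indicator {x. \<bar>x\<bar> \<le> d} \<rho>) = ennreal (c * (\<bar>\<rho>\<bar> powr (1 - 2 * s) * indicator {x. \<bar>x\<bar> \<le> d} \<rho>))"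
      using c by (simp add: indicator_def ennreal_mult)
    also have "\<dots> \<le> ennreal (q \<rho> / \<bar>\<rho>\<bar> powr (1 + 2 * s))"
      by (rule ennreal_leI, rule pw_lower[OF c q0 qc])
    also have "\<dots> = ennreal (q \<rho>) * ennreal (1 / \<bar>\<rho>\<bar> powr (1 + 2 * s))"
      by (rule Iq_pt[of q \<rho> s, OF q0[of \<rho>], symmetric])
    finally show "ennreal c * (ennreal (\<bar>\<rho>\<bar> powr (1 - 2 * s)) * indicator {x. \<bar>x\<bar> \<le> d} \<rho>) \<le> \<dots>" .
  qed
  finally show ?thesis .
qed


lemma local_bounds:
  fixes q :: "real \<Rightarrow> real"
  assumes lim: "((\<lambda>\<rho>. q \<rho> / \<rho>\<^sup>2) \<longlongrightarrow> L) (at 0)" and qz: "q 0 = 0" and e: "e > 0"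
  shows "\<exists>d>0. \<forall>\<rho>. \<bar>\<rho>\<bar> \<le> d \<longrightarrow> (L - e) * \<rho>\<^sup>2 \<le> q \<rho> \<and> q \<rho> \<le> (L + e) * \<rho>\<^sup>2"
proof -
  have "\<forall>\<^sub>F \<rho> in at 0. dist (q \<rho> / \<rho>\<^sup>2) L < e" using lim e by (rule tendstoD)
  then obtain \<delta> where \<delta>: "\<delta> > 0" "\<And>\<rho>. \<rho> \<noteq> 0 \<Longrightarrow> dist \<rho> 0 < \<delta> \<Longrightarrow> dist (q \<rho> / \<rho>\<^sup>2) L < e"
    unfolding eventually_at by auto
  have "(L - e) * \<rho>\<^sup>2 \<le> q \<rho> \<and> q \<rho> \<le> (L + e) * \<rho>\<^sup>2" if r: "\<bar>\<rho>\<bar> \<le> \<delta> / 2" for \<rho>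
  proof (cases "\<rho> = 0")
    case True then show ?thesis using qz by simp
  next
    case False
    have pos: "\<rho>\<^sup>2 > 0" using False by simp
    have "\<bar>q \<rho> / \<rho>\<^sup>2 - L\<bar> < e" using \<delta>(2)[OF False] r \<delta>(1) by (simp add: dist_real_def)
    then have "L - e < q \<rho> / \<rho>\<^sup>2" "q \<rho> / \<rho>\<^sup>2 < L + e" by linarith+
    then have "(L - e) * \<rho>\<^sup>2 < q \<rho>" "q \<rho> < (L + e) * \<rho>\<^sup>2"
      using pos by (simp_all add: less_divide_eq divide_less_eq)
    then show ?thesis by simp
  qed
  then show ?thesis using \<delta>(1) by (intro exI[of _ "\<delta> / 2"]) auto
qed

lemma slim:
  fixes q :: "real \<Rightarrow> real" and B L :: real
  assumes q0: "\<And>\<rho>. q \<rho> \<ge> 0" and qB: "\<And>\<rho>. q \<rho> \<le> B" and qz: "q 0 = 0"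
    and lim: "((\<lambda>\<rho>. q \<rho> / \<rho>\<^sup>2) \<longlongrightarrow> L) (at 0)" and L0: "L \<ge> 0"
  shows "((\<lambda>s. ennreal (1 - s) * Iq q s) \<longlongrightarrow> ennreal L) (at_left 1)"
proof (rule order_tendstoI)
  have ev01: "\<forall>\<^sub>F s in at_left (1::real). s \<in> {0<..<1}" by (rule eventually_at_left_real) simp
  fix y assume y: "y < ennreal L"
  define c where "c = enn2real y"
  have yt: "y < \<infinity>" by (rule order.strict_trans[OF y]) simp
  have yc: "y = ennreal c" using yt by (simp add: c_def)
  have c0: "c \<ge> 0" by (simp add: c_def)
  have cL: "c < L" using y yc c0 by (simp add: ennreal_less_iff)
  define e where "e = (L - c) / 2"
  have e: "e > 0" using cL by (simp add: e_def)
  obtain d where d: "d > 0" "\<And>\<rho>. \<bar>\<rho>\<bar> \<le> d \<Longrightarrow> (L - e) * \<rho>\<^sup>2 \<le> q \<rho>"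
    using local_bounds[OF lim qz e] by blast
  have Le1: "L - e \<ge> 0" using cL c0 unfolding e_def by (simp add: field_simps)
  have Le2: "c < L - e" using cL c0 unfolding e_def by (simp add: field_simps)
  note Le = Le1 Le2
  have "((\<lambda>s. (L - e) * d powr (2 - 2 * s)) \<longlongrightarrow> (L - e) * d powr (2 - 2 * 1)) (at_left 1)"
    using d(1) by (intro tendsto_intros) auto
  then have "((\<lambda>s. (L - e) * d powr (2 - 2 * s)) \<longlongrightarrow> L - e) (at_left 1)" using d(1) by simp
  then have ev: "\<forall>\<^sub>F s in at_left 1. c < (L - e) * d powr (2 - 2 * s)"
    using Le(2) by (rule order_tendstoD)
  show "\<forall>\<^sub>F s in at_left 1. y < ennreal (1 - s) * Iq q s"
  proof (rule eventually_mono[OF eventually_conj[OF ev ev01]])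
    fix s assume A: "c < (L - e) * d powr (2 - 2 * s) \<and> s \<in> {0<..<1}"
    then have s: "0 < s" "s < 1" by auto
    have "y < ennreal ((L - e) * d powr (2 - 2 * s))" using A yc c0 by (simp add: ennreal_less_iff)
    also have "(L - e) * d powr (2 - 2 * s) = (1 - s) * ((L - e) * (d powr (2 - 2 * s) / (1 - s)))"
      using s by simp
    also have "ennreal \<dots> = ennreal (1 - s) * ennreal ((L - e) * (d powr (2 - 2 * s) / (1 - s)))"
      by (rule ennreal_mult) (use s Le(1) in auto)
    also have "\<dots> \<le> ennreal (1 - s) * Iq q s"
      by (intro mult_left_mono I_lower[OF s d(1) Le(1) q0 d(2)]) auto
    finally show "y < ennreal (1 - s) * Iq q s" .
  qed
next
  have ev01: "\<forall>\<^sub>F s in at_left (1::real). s \<in> {0<..<1}" by (rule eventually_at_left_real) simp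
  have B0: "B \<ge> 0" using q0[of 0] qB[of 0] by simp
  fix y assume y: "ennreal L < y"
  obtain z where z: "ennreal L < z" "z < y" using dense[OF y] by blast
  define c where "c = enn2real z"
  have zt: "z < \<infinity>" by (rule order.strict_trans2[OF z(2)]) simp
  have zc: "z = ennreal c" using zt by (simp add: c_def)
  have c0: "c \<ge> 0" by (simp add: c_def)
  have cL: "L < c" using z(1) zc L0 by (simp add: ennreal_less_iff)
  define e where "e = (c - L) / 2"
  have e: "e > 0" using cL by (simp add: e_def)
  obtain d where d: "d > 0" "\<And>\<rho>. \<bar>\<rho>\<bar> \<le> d \<Longrightarrow> q \<rho> \<le> (L + e) * \<rho>\<^sup>2"
    using local_bounds[OF lim qz e] by blast
  have Le1: "L + e \<ge> 0" using cL L0 e unfolding e_def by (simp add: field_simps)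
  have Le2: "L + e < c" using cL L0 e unfolding e_def by (simp add: field_simps)
  note Le = Le1 Le2
  define U where "U s = (L + e) * d powr (2 - 2 * s) + (1 - s) * (B * (d powr (- 2 * s) / s))" for s
  have "(U \<longlongrightarrow> (L + e) * d powr (2 - 2 * 1) + (1 - 1) * (B * (d powr (- 2 * 1) / 1))) (at_left 1)"
    unfolding U_def using d(1) by (intro tendsto_intros) auto
  then have "(U \<longlongrightarrow> L + e) (at_left 1)" using d(1) by simp
  then have ev: "\<forall>\<^sub>F s in at_left 1. U s < c"
    using Le(2) by (rule order_tendstoD)
  show "\<forall>\<^sub>F s in at_left 1. ennreal (1 - s) * Iq q s < y"
  proof (rule eventually_mono[OF eventually_conj[OF ev ev01]])
    fix s assume A: "U s < c \<and> s \<in> {0<..<1}"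
    then have s: "0 < s" "s < 1" by auto
    have "ennreal (1 - s) * Iq q s \<le> ennreal (1 - s) * ennreal ((L + e) * (d powr (2 - 2 * s) / (1 - s)) + B * (d powr (- 2 * s) / s))"
      by (intro mult_left_mono I_upper[OF s d(1) Le(1) q0 qB d(2)]) auto
    also have "\<dots> = ennreal ((1 - s) * ((L + e) * (d powr (2 - 2 * s) / (1 - s)) + B * (d powr (- 2 * s) / s)))"
      by (rule ennreal_mult[symmetric]) (use s B0 Le(1) in auto)
    also have "(1 - s) * ((L + e) * (d powr (2 - 2 * s) / (1 - s)) + B * (d powr (- 2 * s) / s)) = U s"
      using s by (simp add: U_def distrib_left)
    also have "ennreal (U s) < ennreal c" using A Le by (intro ennreal_lessI) auto
    also have "\<dots> < y" using z zc by simp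
    finally show "ennreal (1 - s) * Iq q s < y" .
  qed
qed


context spec
begin

lemma meas_snd_gen[measurable]: "snd \<in> measurable (N \<Otimes>\<^sub>M a) borel"
  using measurable_compose[OF measurable_snd meas_id_a] by (simp add: comp_def)

lemma meas_ff[measurable]: "(\<lambda>z. fst (fst z)) \<in> measurable ((lborel \<Otimes>\<^sub>M lborel) \<Otimes>\<^sub>M a) borel"
  using measurable_compose[OF measurable_fst measurable_fst[of lborel lborel]] by (simp add: comp_def measurable_lborel2)

lemma meas_sf[measurable]: "(\<lambda>z. snd (fst z)) \<in> measurable ((lborel \<Otimes>\<^sub>M lborel) \<Otimes>\<^sub>M a) borel"
  using measurable_compose[OF measurable_fst measurable_snd[of lborel lborel]] by (simp add: comp_def measurable_lborel2)

lemma Hsa_eq: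
  assumes um[measurable]: "u \<in> borel_measurable borel"
  shows "Hsa_sq a s u = (\<integral>\<^sup>+\<rho>. Q u \<rho> * ennreal (1 / \<bar>\<rho>\<bar> powr (1 + 2 * s)) \<partial>lborel)"
proof -
  define f where "f x \<rho> = (\<integral>\<^sup>+\<omega>. ennreal ((u x - u (x + \<rho> *\<^sub>R \<omega>))\<^sup>2 / \<bar>\<rho>\<bar> powr (1 + 2 * s)) \<partial>a)" for x \<rho>
  have mE: "(\<lambda>z. ennreal ((u (fst (fst z)) - u (fst (fst z) + snd (fst z) *\<^sub>R snd z))\<^sup>2 / \<bar>snd (fst z)\<bar> powr (1 + 2 * s)))
     \<in> borel_measurable ((lborel \<Otimes>\<^sub>M lborel) \<Otimes>\<^sub>M a)" by measurable
  have mf: "case_prod f \<in> borel_measurable (lborel \<Otimes>\<^sub>M lborel)"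
  proof -
    have "(\<lambda>p. \<integral>\<^sup>+\<omega>. ennreal ((u (fst (fst (p, \<omega>))) - u (fst (fst (p, \<omega>)) + snd (fst (p, \<omega>)) *\<^sub>R snd (p, \<omega>)))\<^sup>2 / \<bar>snd (fst (p, \<omega>))\<bar> powr (1 + 2 * s)) \<partial>a)
      \<in> borel_measurable (lborel \<Otimes>\<^sub>M lborel)"
      by (rule borel_measurable_nn_integral) (use mE in \<open>simp add: case_prod_beta'\<close>)
    then show ?thesis by (simp add: f_def case_prod_beta')
  qed
  have "Hsa_sq a s u = (\<integral>\<^sup>+x. \<integral>\<^sup>+\<rho>. f x \<rho> \<partial>lborel \<partial>lborel)"
    by (simp add: Hsa_sq_def f_def)
  also have "\<dots> = (\<integral>\<^sup>+\<rho>. \<integral>\<^sup>+x. f x \<rho> \<partial>lborel \<partial>lborel)"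
    by (rule lborel_pair.Fubini'[OF mf, symmetric])
  also have "\<dots> = (\<integral>\<^sup>+\<rho>. Q u \<rho> * ennreal (1 / \<bar>\<rho>\<bar> powr (1 + 2 * s)) \<partial>lborel)"
  proof (rule nn_integral_cong)
    fix \<rho> :: real
    define c where "c = ennreal (1 / \<bar>\<rho>\<bar> powr (1 + 2 * s))"
    have m1: "(\<lambda>\<omega>. ennreal ((u x - u (x + \<rho> *\<^sub>R \<omega>))\<^sup>2)) \<in> borel_measurable a" for x by measurable
    have m2: "(\<lambda>p. ennreal ((u (fst p) - u (fst p + \<rho> *\<^sub>R snd p))\<^sup>2)) \<in> borel_measurable M" by measurable
    have m3: "(\<lambda>x. \<integral>\<^sup>+\<omega>. ennreal ((u x - u (x + \<rho> *\<^sub>R \<omega>))\<^sup>2) \<partial>a) \<in> borel_measurable lborel"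
      using borel_measurable_nn_integral_fst[OF m2] by simp
    have "f x \<rho> = (\<integral>\<^sup>+\<omega>. ennreal ((u x - u (x + \<rho> *\<^sub>R \<omega>))\<^sup>2) * c \<partial>a)" for x
      unfolding f_def c_def by (intro nn_integral_cong) (simp add: ennreal_mult[symmetric] divide_inverse)
    also have "\<dots> x = (\<integral>\<^sup>+\<omega>. ennreal ((u x - u (x + \<rho> *\<^sub>R \<omega>))\<^sup>2) \<partial>a) * c" for x
      by (rule nn_integral_multc[OF m1])
    finally have "(\<integral>\<^sup>+x. f x \<rho> \<partial>lborel) = (\<integral>\<^sup>+x. (\<integral>\<^sup>+\<omega>. ennreal ((u x - u (x + \<rho> *\<^sub>R \<omega>))\<^sup>2) \<partial>a) * c \<partial>lborel)"
      by simp
    also have "\<dots> = (\<integral>\<^sup>+x. \<integral>\<^sup>+\<omega>. ennreal ((u x - u (x + \<rho> *\<^sub>R \<omega>))\<^sup>2) \<partial>a \<partial>lborel) * c"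
      by (rule nn_integral_multc[OF m3])
    also have "(\<integral>\<^sup>+x. \<integral>\<^sup>+\<omega>. ennreal ((u x - u (x + \<rho> *\<^sub>R \<omega>))\<^sup>2) \<partial>a \<partial>lborel) = Q u \<rho>"
      unfolding Q_def N2_def using nn_integral_fst[OF m2] by simp
    finally show "(\<integral>\<^sup>+x. f x \<rho> \<partial>lborel) = Q u \<rho> * ennreal (1 / \<bar>\<rho>\<bar> powr (1 + 2 * s))"
      by (simp add: c_def)
  qed
  finally show ?thesis .
qed

lemma main_lim:
  assumes L: "L2fun u" and l0: "l \<ge> 0" and lim: "((\<lambda>r. qn u r / \<bar>r\<bar>) \<longlongrightarrow> l) (at 0)"
  shows "((\<lambda>s. ennreal (1 - s) * Hsa_sq a s u) \<longlongrightarrow> ennreal (l\<^sup>2)) (at_left 1)"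
proof -
  have um: "u \<in> borel_measurable borel" using L by (simp add: L2fun_def)
  define q where "q \<rho> = (qn u \<rho>)\<^sup>2" for \<rho>
  define B where "B = (2 * sqrt (ma * enn2real (N2 lborel u)))\<^sup>2"
  have Qq: "Q u \<rho> = ennreal (q \<rho>)" for \<rho>
    using Q_L2(1)[OF L, of \<rho>] by (simp add: q_def qn_def)
  have H: "Hsa_sq a s u = Iq q s" for s
    unfolding Hsa_eq[OF um] Iq_def Qq ..
  have q0: "q \<rho> \<ge> 0" for \<rho> by (simp add: q_def)
  have qB: "q \<rho> \<le> B" for \<rho>
    unfolding q_def B_def by (rule power_mono[OF Q_L2(2)[OF L] qn_nonneg])
  have qz: "q 0 = 0" by (simp add: q_def qn_zero)
  have "((\<lambda>\<rho>. (qn u \<rho> / \<bar>\<rho>\<bar>)\<^sup>2) \<longlongrightarrow> l\<^sup>2) (at 0)" by (intro tendsto_intros lim)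
  moreover have "(\<lambda>\<rho>. (qn u \<rho> / \<bar>\<rho>\<bar>)\<^sup>2) = (\<lambda>\<rho>. q \<rho> / \<rho>\<^sup>2)"
    by (rule ext) (simp add: q_def power_divide)
  ultimately have qlim: "((\<lambda>\<rho>. q \<rho> / \<rho>\<^sup>2) \<longlongrightarrow> l\<^sup>2) (at 0)" by simp
  show ?thesis unfolding H using slim[OF q0 qB qz qlim] l0 by simp
qed

lemma H1a_sq_val:
  assumes "u \<in> H1a0 a"
  shows "\<exists>l\<ge>0. L2fun u \<and> ((\<lambda>r. qn u r / \<bar>r\<bar>) \<longlongrightarrow> l) (at 0) \<and> H1a_sq a u = ennreal (l\<^sup>2)"
proof -
  have um: "u \<in> borel_measurable lborel" and "\<exists>\<phi>. H1a0_approx a u \<phi>" using assms by (auto simp: H1a0_def)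
  then obtain \<phi> where ap: "H1a0_approx a u \<phi>" by blast
  from u_qn_lim[OF um ap] ell_nonneg[OF um ap] H_lim[OF um ap]
  obtain l where l: "((\<lambda>r. qn u r / \<bar>r\<bar>) \<longlongrightarrow> l) (at 0)" "l \<ge> 0"
    "(\<lambda>k. H1a_sq_smooth a (\<phi> k)) \<longlonglongrightarrow> ennreal (l\<^sup>2)" by blast
  have all: "(\<lambda>k. H1a_sq_smooth a (\<phi>' k)) \<longlonglongrightarrow> ennreal (l\<^sup>2)" if ap': "H1a0_approx a u \<phi>'" for \<phi>'
  proof -
    from u_qn_lim[OF um ap'] H_lim[OF um ap']
    obtain l' where l': "((\<lambda>r. qn u r / \<bar>r\<bar>) \<longlongrightarrow> l') (at 0)"
      "(\<lambda>k. H1a_sq_smooth a (\<phi>' k)) \<longlonglongrightarrow> ennreal (l'\<^sup>2)" by blast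
    have "l' = l" using tendsto_unique[OF _ l'(1) l(1)] by simp
    then show ?thesis using l'(2) by simp
  qed
  have "H1a_sq a u = ennreal (l\<^sup>2)"
    unfolding H1a_sq_def
  proof (rule the_equality)
    show "\<forall>\<phi>. H1a0_approx a u \<phi> \<longrightarrow> (\<lambda>k. H1a_sq_smooth a (\<phi> k)) \<longlonglongrightarrow> ennreal (l\<^sup>2)" using all by blast
    fix L assume "\<forall>\<phi>. H1a0_approx a u \<phi> \<longrightarrow> (\<lambda>k. H1a_sq_smooth a (\<phi> k)) \<longlonglongrightarrow> L"
    then have "(\<lambda>k. H1a_sq_smooth a (\<phi> k)) \<longlonglongrightarrow> L" using ap by blast
    then show "L = ennreal (l\<^sup>2)" using l(3) by (rule LIMSEQ_unique)
  qed
  then show ?thesis using l u_L2[OF um ap] by blast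
qed

end

theorem proposition5p4:
  fixes a :: "'a::euclidean_space measure" and \<Lambda> :: real and u :: "'a \<Rightarrow> real"
  assumes "spectral_measure \<Lambda> a"
    and "u \<in> H1a0 a"
  shows "((\<lambda>s. ennreal (1 - s) * Hsa_sq a s u) \<longlongrightarrow> H1a_sq a u) (at_left 1)"
proof -
  have sets: "sets a = sets (restrict_space borel (sphere (0::'a) 1))"
    and le: "emeasure a (space a) \<le> ennreal \<Lambda>"
    using assms(1) by (auto simp: spectral_measure_def)
  have fin: "emeasure a (space a) < \<infinity>" using le by (simp add: le_less_trans)
  interpret spec a by (rule spec.intro[OF sets fin])
  obtain l where l: "l \<ge> 0" "L2fun u" "((\<lambda>r. qn u r / \<bar>r\<bar>) \<longlongrightarrow> l) (at 0)" "H1a_sq a u = ennreal (l\<^sup>2)"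
    using H1a_sq_val[OF assms(2)] by blast
  show ?thesis unfolding l(4) by (rule main_lim[OF l(2) l(1) l(3)])
qed


end
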